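(* Let $\lambda\neq 0$, $a\ge 0$, $c\in\mathbb{R}$ with $a^2+c^2\neq 0$, and let $\Omega=[\omega^-,\omega^+]$ with $\omega^-<0<\omega^+$. Consider the control system on $\mathbb{R}^2$ $$\dot s=\omega,\qquad \dot t=\lambda t+\omega(c+as),\qquad \omega\in\Omega .$$ Then: (1) If $a=0$, the system admits a unique control set $\mathcal C$, its closure is $\mathbb{R}\times\left(-\frac{c}{\lambda}\Omega\right)$, and $\mathcal C$ is closed if $\lambda<0$ and open if $\lambda>0$. (2) If $a>0$ and $\lambda<0$, the system admits a unique control set $\mathcal C$, it is closed, and $\mathcal C=\mathbb{R}^2\setminus(\mathcal C^+\cup\mathcal C^-)$, where, with $F_\omega(s,t)=\lambda^2 t+\omega(\lambda(c+as)+a\omega)$, $\mathbf v_a=(-c/a,0)$ and $\varphi(\tau,\mathbf v_a,\omega)=\big(-\tfrac ca+\tau\omega,\ \tfrac{a\omega^2}{\lambda^2}(e^{\lambda\tau}-\lambda\tau-1)\big)$, $$\mathcal C^-=\{\mathbf v: F_{\omega^-}(\mathbf v)<0,\ F_{\omega^+}(\mathbf v)<0\},$$ $$\mathcal C^+=\{(s,t):\exists\tau\ge0,\ \exists\omega\in\{\omega^-,\omega^+\},\ s=\varphi_1(\tau,\mathbf v_a,\omega),\ t>\varphi_2(\tau,\mathbf v_a,\omega)\}.$$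
   Context: Controls are piecewise constant functions $\omega:\mathbb{R}\to\Omega$; $\varphi(\tau,\mathbf v,\omega)$ is the solution at time $\tau$ from $\mathbf v$, and $\mathcal O^+(\mathbf v)$ is the set of points reachable from $\mathbf v$ in nonnegative time. A control set is a nonempty set $\mathcal C\subset\mathbb{R}^2$, maximal with respect to inclusion, such that (i) for every $x\in\mathcal C$ there is a control $\omega$ with $\varphi(\tau,x,\omega)\in\mathcal C$ for all $\tau\ge0$, and (ii) $\mathcal C\subset\overline{\mathcal O^+(x)}$ for all $x\in\mathcal C$. This system is (up to a diffeomorphism) the singular linear control system with $\beta=0$, $\lambda+\beta\neq0$ on $(\mathbb{R}\mathbf e_1\times\{0\})\backslash\mathbb{H}\simeq\mathbb{R}^2$. *)

theory Defs
  imports "HOL-Analysis.Analysis"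
begin

definition fld :: "real \<Rightarrow> real \<Rightarrow> real \<Rightarrow> real \<Rightarrow> real \<times> real \<Rightarrow> real \<times> real" where
  "fld lam a c w v = (w, lam * snd v + w * (c + a * fst v))"

definition pc_control :: "real set \<Rightarrow> (real \<Rightarrow> real) \<Rightarrow> bool" where
  "pc_control Om w \<longleftrightarrow> (\<forall>r. w r \<in> Om) \<and>
     (\<forall>p q. \<exists>D. finite D \<and>
        (\<forall>x y. p \<le> x \<longrightarrow> x \<le> y \<longrightarrow> y \<le> q \<longrightarrow> {x..y} \<inter> D = {} \<longrightarrow> w x = w y))"

definition is_sol :: "real \<Rightarrow> real \<Rightarrow> real \<Rightarrow> (real \<Rightarrow> real) \<Rightarrow> real \<times> real \<Rightarrow> (real \<Rightarrow> real \<times> real) \<Rightarrow> bool" where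
  "is_sol lam a c w v x \<longleftrightarrow> x 0 = v \<and>
     (\<forall>\<tau>\<ge>0. ((\<lambda>r. fld lam a c (w r) (x r)) has_integral (x \<tau> - v)) {0..\<tau>})"

definition orbit_plus :: "real \<Rightarrow> real \<Rightarrow> real \<Rightarrow> real set \<Rightarrow> real \<times> real \<Rightarrow> (real \<times> real) set" where
  "orbit_plus lam a c Om v = {y. \<exists>w x \<tau>. pc_control Om w \<and> is_sol lam a c w v x \<and> \<tau> \<ge> 0 \<and> x \<tau> = y}"

definition cs_prop :: "real \<Rightarrow> real \<Rightarrow> real \<Rightarrow> real set \<Rightarrow> (real \<times> real) set \<Rightarrow> bool" where
  "cs_prop lam a c Om C \<longleftrightarrow> C \<noteq> {} \<and>
     (\<forall>v\<in>C. \<exists>w x. pc_control Om w \<and> is_sol lam a c w v x \<and> (\<forall>\<tau>\<ge>0. x \<tau> \<in> C)) \<and>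
     (\<forall>v\<in>C. C \<subseteq> closure (orbit_plus lam a c Om v))"

definition control_set :: "real \<Rightarrow> real \<Rightarrow> real \<Rightarrow> real set \<Rightarrow> (real \<times> real) set \<Rightarrow> bool" where
  "control_set lam a c Om C \<longleftrightarrow> cs_prop lam a c Om C \<and>
     (\<forall>D. cs_prop lam a c Om D \<and> C \<subseteq> D \<longrightarrow> D = C)"

definition Fw :: "real \<Rightarrow> real \<Rightarrow> real \<Rightarrow> real \<Rightarrow> real \<times> real \<Rightarrow> real" where
  "Fw lam a c w v = lam\<^sup>2 * snd v + w * (lam * (c + a * fst v) + a * w)"

text \<open>Explicit solution from v_a = (-c/a, 0) under the constant control w.\<close>
definition phi_va :: "real \<Rightarrow> real \<Rightarrow> real \<Rightarrow> real \<Rightarrow> real \<Rightarrow> real \<times> real" where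
  "phi_va lam a c \<tau> w = (- c / a + \<tau> * w, a * w\<^sup>2 / lam\<^sup>2 * (exp (lam * \<tau>) - lam * \<tau> - 1))"

definition Cminus :: "real \<Rightarrow> real \<Rightarrow> real \<Rightarrow> real \<Rightarrow> real \<Rightarrow> (real \<times> real) set" where
  "Cminus lam a c wm wp = {v. Fw lam a c wm v < 0 \<and> Fw lam a c wp v < 0}"

definition Cplus :: "real \<Rightarrow> real \<Rightarrow> real \<Rightarrow> real \<Rightarrow> real \<Rightarrow> (real \<times> real) set" where
  "Cplus lam a c wm wp = {(s, t). \<exists>\<tau>\<ge>0. \<exists>w\<in>{wm, wp}.
      s = fst (phi_va lam a c \<tau> w) \<and> t > snd (phi_va lam a c \<tau> w)}"

end

theory Submission
  imports Defs "HOL-Real_Asymp.Real_Asymp"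
begin

definition Ac :: "real \<Rightarrow> real \<Rightarrow> real \<Rightarrow> real" where
  "Ac lam a w = -(a*w^2)/lam"
definition Bc :: "real \<Rightarrow> real \<Rightarrow> real \<Rightarrow> real \<Rightarrow> real \<times> real \<Rightarrow> real" where
  "Bc lam a c w p = (Ac lam a w - w*(c + a*fst p))/lam"
definition flw :: "real \<Rightarrow> real \<Rightarrow> real \<Rightarrow> real \<Rightarrow> real \<Rightarrow> real \<times> real \<Rightarrow> real \<times> real" where
  "flw lam a c w \<tau> p = (fst p + w*\<tau>, (snd p - Bc lam a c w p) * exp(lam*\<tau>) + Ac lam a w * \<tau> + Bc lam a c w p)"

lemma flw_0[simp]: "flw lam a c w 0 p = p"
  by (simp add: flw_def)

lemma flw_deriv:
  assumes "lam \<noteq> 0"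
  shows "((\<lambda>r. flw lam a c w (r - T) y) has_vector_derivative fld lam a c w (flw lam a c w (r - T) y)) (at r within S)"
proof -
  let ?B = "Bc lam a c w y" and ?A = "Ac lam a w"
  have 1: "((\<lambda>r. fst y + w*(r-T)) has_vector_derivative w) (at r within S)"
    unfolding has_real_derivative_iff_has_vector_derivative[symmetric]
    by (auto intro!: derivative_eq_intros)
  have 2: "((\<lambda>r. (snd y - ?B) * exp(lam*(r-T)) + ?A * (r-T) + ?B) has_vector_derivative
     ((snd y - ?B) * exp(lam*(r-T)) * lam + ?A)) (at r within S)"
    unfolding has_real_derivative_iff_has_vector_derivative[symmetric]
    by (auto intro!: derivative_eq_intros)
  have e: "(snd y - ?B) * exp(lam*(r-T)) * lam + ?A = lam * ((snd y - ?B) * exp(lam*(r-T)) + ?A * (r-T) + ?B) + w * (c + a * (fst y + w*(r-T)))"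
    using assms by (simp add: Ac_def Bc_def field_simps power2_eq_square)
  show ?thesis
    unfolding flw_def fld_def using has_vector_derivative_Pair[OF 1 2] e by simp
qed

lemma pc_const: "\<omega> \<in> Om \<Longrightarrow> pc_control Om (\<lambda>_. \<omega>)"
  unfolding pc_control_def by (auto intro!: exI[of _ "{}"])

lemma flw_integral:
  assumes "lam \<noteq> 0" "T \<le> \<tau>"
  shows "((\<lambda>r. fld lam a c w (flw lam a c w (r - T) y)) has_integral (flw lam a c w (\<tau> - T) y - y)) {T..\<tau>}"
proof -
  have "((\<lambda>r. fld lam a c w (flw lam a c w (r - T) y)) has_integral
     (flw lam a c w (\<tau> - T) y - flw lam a c w (T - T) y)) {T..\<tau>}"
    by (rule fundamental_theorem_of_calculus) (use assms flw_deriv in auto)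
  then show ?thesis by simp
qed

lemma const_sol:
  assumes "lam \<noteq> 0"
  shows "is_sol lam a c (\<lambda>_. w) p (\<lambda>r. flw lam a c w r p)"
  unfolding is_sol_def using flw_integral[OF assms, of 0 _ a c w p] by auto

lemma concat_pc:
  assumes "pc_control Om w" "\<omega> \<in> Om"
  shows "pc_control Om (\<lambda>r. if r < T then w r else \<omega>)"
  unfolding pc_control_def
proof (intro conjI allI)
  show "(if r < T then w r else \<omega>) \<in> Om" for r using assms unfolding pc_control_def by auto
  fix p q
  obtain D where D: "finite D" "\<forall>x y. p \<le> x \<longrightarrow> x \<le> y \<longrightarrow> y \<le> q \<longrightarrow> {x..y} \<inter> D = {} \<longrightarrow> w x = w y"
    using assms unfolding pc_control_def by blast
  show "\<exists>D. finite D \<and> (\<forall>x y. p \<le> x \<longrightarrow> x \<le> y \<longrightarrow> y \<le> q \<longrightarrow> {x..y} \<inter> D = {} \<longrightarrow>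
      (if x < T then w x else \<omega>) = (if y < T then w y else \<omega>))"
  proof (intro exI[of _ "insert T D"] conjI allI impI)
    fix x y assume h: "p \<le> x" "x \<le> y" "y \<le> q" "{x..y} \<inter> insert T D = {}"
    then have "T \<notin> {x..y}" by auto
    then have "y < T \<or> T < x" using h by auto
    then show "(if x < T then w x else \<omega>) = (if y < T then w y else \<omega>)"
      using D h by auto
  qed (use D in auto)
qed

lemma concat_sol:
  assumes lam: "lam \<noteq> 0" and sol: "is_sol lam a c w p x" and T: "T \<ge> 0"
  shows "is_sol lam a c (\<lambda>r. if r < T then w r else \<omega>) p
           (\<lambda>r. if r \<le> T then x r else flw lam a c \<omega> (r - T) (x T))"
  unfolding is_sol_def
proof (intro conjI allI impI)
  let ?w = "\<lambda>r. if r < T then w r else \<omega>"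
  let ?x = "\<lambda>r. if r \<le> T then x r else flw lam a c \<omega> (r - T) (x T)"
  show "?x 0 = p" using sol T unfolding is_sol_def by auto
  fix \<tau> :: real assume t0: "0 \<le> \<tau>"
  have old: "((\<lambda>r. fld lam a c (w r) (x r)) has_integral (x s - p)) {0..s}" if "s \<ge> 0" for s
    using sol that unfolding is_sol_def by auto
  have spike: "((\<lambda>r. fld lam a c (?w r) (?x r)) has_integral (x s - p)) {0..s}" if "0 \<le> s" "s \<le> T" for s
    by (rule has_integral_spike_finite[of "{T}" _ _ "\<lambda>r. fld lam a c (w r) (x r)"])
       (use that old in auto)
  show "((\<lambda>r. fld lam a c (?w r) (?x r)) has_integral (?x \<tau> - p)) {0..\<tau>}"
  proof (cases "\<tau> \<le> T")
    case True then show ?thesis using spike[OF t0] by simp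
  next
    case False
    have i2: "((\<lambda>r. fld lam a c (?w r) (?x r)) has_integral (flw lam a c \<omega> (\<tau> - T) (x T) - x T)) {T..\<tau>}"
      by (rule has_integral_spike_finite[of "{}" _ _ "\<lambda>r. fld lam a c \<omega> (flw lam a c \<omega> (r - T) (x T))"])
         (use False flw_integral[OF lam, of T \<tau>] in auto)
    have "((\<lambda>r. fld lam a c (?w r) (?x r)) has_integral ((x T - p) + (flw lam a c \<omega> (\<tau> - T) (x T) - x T))) {0..\<tau>}"
      by (rule has_integral_combine[OF T _ spike[OF T order_refl] i2]) (use False in auto)
    then show ?thesis using False by simp
  qed
qed

inductive reach_c :: "real \<Rightarrow> real \<Rightarrow> real \<Rightarrow> real set \<Rightarrow> real \<times> real \<Rightarrow> real \<times> real \<Rightarrow> bool"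
  for lam a c Om p where
  rc_refl: "reach_c lam a c Om p p"
| rc_step: "reach_c lam a c Om p q \<Longrightarrow> \<omega> \<in> Om \<Longrightarrow> \<tau> \<ge> 0 \<Longrightarrow> reach_c lam a c Om p (flw lam a c \<omega> \<tau> q)"

lemma reach_sol:
  assumes "lam \<noteq> 0" "\<omega>0 \<in> Om" "reach_c lam a c Om p q"
  shows "\<exists>w x T. pc_control Om w \<and> is_sol lam a c w p x \<and> T \<ge> 0 \<and> x T = q"
  using assms(3)
proof induction
  case rc_refl
  then show ?case using pc_const[OF assms(2)] const_sol[OF assms(1)]
    by (intro exI[of _ "\<lambda>_. \<omega>0"] exI[of _ "\<lambda>r. flw lam a c \<omega>0 r p"] exI[of _ 0]) auto
next
  case (rc_step q \<omega> \<tau>)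
  then obtain w x T where h: "pc_control Om w" "is_sol lam a c w p x" "T \<ge> 0" "x T = q" by blast
  show ?case
  proof (intro exI conjI)
    show "pc_control Om (\<lambda>r. if r < T then w r else \<omega>)" using concat_pc h rc_step by blast
    show "is_sol lam a c (\<lambda>r. if r < T then w r else \<omega>) p
           (\<lambda>r. if r \<le> T then x r else flw lam a c \<omega> (r - T) (x T))"
      using concat_sol[OF assms(1) h(2) h(3)] .
    show "T + \<tau> \<ge> 0" using h rc_step by simp
    show "(if T + \<tau> \<le> T then x (T + \<tau>) else flw lam a c \<omega> (T + \<tau> - T) (x T)) = flw lam a c \<omega> \<tau> q"
      using h rc_step by auto
  qed
qed

lemma reach_orbit:
  assumes "lam \<noteq> 0" "Om \<noteq> {}" "reach_c lam a c Om p q"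
  shows "q \<in> orbit_plus lam a c Om p"
  using reach_sol[OF assms(1) _ assms(3)] assms(2) unfolding orbit_plus_def by blast

lemma reach_trans:
  assumes "reach_c lam a c Om q r" "reach_c lam a c Om p q"
  shows "reach_c lam a c Om p r"
  using assms by induction (auto intro: rc_step)

lemma flw_cont: "continuous_on UNIV (flw lam a c w \<tau>)"
  unfolding flw_def Bc_def divide_inverse by (intro continuous_intros)

lemma reach_lsc:
  assumes "reach_c lam a c Om q r" "e > 0"
  shows "\<exists>d>0. \<forall>q'. dist q' q < d \<longrightarrow> (\<exists>r'. reach_c lam a c Om q' r' \<and> dist r' r < e)"
  using assms
proof (induction arbitrary: e)
  case rc_refl
  show ?case
  proof (intro exI[of _ e] conjI allI impI)
    fix q' assume "dist q' q < e"
    then show "\<exists>r'. reach_c lam a c Om q' r' \<and> dist r' q < e" by (intro exI[of _ q']) (auto intro: reach_c.rc_refl)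
  qed (use rc_refl in auto)
next
  case (rc_step r \<omega> \<tau>)
  have "isCont (flw lam a c \<omega> \<tau>) r" using flw_cont continuous_on_eq_continuous_at by blast
  then obtain e1 where e1: "e1 > 0" "\<forall>r'. dist r' r < e1 \<longrightarrow> dist (flw lam a c \<omega> \<tau> r') (flw lam a c \<omega> \<tau> r) < e"
    using rc_step.prems unfolding continuous_at_eps_delta by blast
  obtain d where d: "d > 0" "\<forall>q'. dist q' q < d \<longrightarrow> (\<exists>r'. reach_c lam a c Om q' r' \<and> dist r' r < e1)"
    using rc_step.IH[OF e1(1)] by blast
  show ?case
  proof (intro exI[of _ d] conjI allI impI)
    fix q' assume "dist q' q < d"
    then obtain r' where "reach_c lam a c Om q' r'" "dist r' r < e1" using d by blast
    then show "\<exists>r''. reach_c lam a c Om q' r'' \<and> dist r'' (flw lam a c \<omega> \<tau> r) < e"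
      using e1(2) rc_step.hyps by (intro exI[of _ "flw lam a c \<omega> \<tau> r'"]) (metis reach_c.rc_step)
  qed (use d in auto)
qed

definition Rc where "Rc lam a c Om p = closure {q. reach_c lam a c Om p q}"

lemma Rc_trans:
  assumes "q \<in> Rc lam a c Om p" "r \<in> Rc lam a c Om q"
  shows "r \<in> Rc lam a c Om p"
  unfolding Rc_def closure_approachable
proof (intro allI impI)
  fix e :: real assume e: "e > 0"
  obtain r1 where r1: "reach_c lam a c Om q r1" "dist r1 r < e/2"
    using assms(2) e unfolding Rc_def closure_approachable by (metis half_gt_zero mem_Collect_eq)
  obtain d where d: "d > 0" "\<forall>q'. dist q' q < d \<longrightarrow> (\<exists>r'. reach_c lam a c Om q' r' \<and> dist r' r1 < e/2)"
    using reach_lsc[OF r1(1), of "e/2"] e by auto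
  obtain q' where q': "reach_c lam a c Om p q'" "dist q' q < d"
    using assms(1) d unfolding Rc_def closure_approachable by blast
  obtain r' where r': "reach_c lam a c Om q' r'" "dist r' r1 < e/2" using d q' by blast
  have "reach_c lam a c Om p r'" using reach_trans r' q' by blast
  moreover have "dist r' r < e" using r' r1 dist_triangle_half_l[of r' r1 e r] by (simp add: dist_commute) 
  ultimately show "\<exists>y\<in>{q. reach_c lam a c Om p q}. dist y r < e" by blast
qed

lemma Rc_reach: "reach_c lam a c Om p q \<Longrightarrow> q \<in> Rc lam a c Om p"
  unfolding Rc_def by (simp add: closure_def)

lemma Rc_closed: "closed (Rc lam a c Om p)" unfolding Rc_def by simp

lemma Rc_approx:
  assumes "\<And>e. e > 0 \<Longrightarrow> \<exists>z\<in>Rc lam a c Om p. dist z y < e"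
  shows "y \<in> Rc lam a c Om p"
  using assms Rc_closed closed_approachable by blast

lemma Rc_orbit:
  assumes "lam \<noteq> 0" "Om \<noteq> {}"
  shows "Rc lam a c Om p \<subseteq> closure (orbit_plus lam a c Om p)"
  unfolding Rc_def by (rule closure_mono) (use reach_orbit[OF assms] in blast)

lemma fld_cont: "continuous_on UNIV (fld lam a c w)"
  unfolding fld_def by (intro continuous_intros)

lemma sol_int:
  assumes "is_sol lam a c w p x" "s \<ge> 0"
  shows "x s = p + integral {0..s} (\<lambda>r. fld lam a c (w r) (x r))"
    "(\<lambda>r. fld lam a c (w r) (x r)) integrable_on {0..s}"
proof -
  have h: "((\<lambda>r. fld lam a c (w r) (x r)) has_integral (x s - p)) {0..s}"
    using assms unfolding is_sol_def by auto
  show "x s = p + integral {0..s} (\<lambda>r. fld lam a c (w r) (x r))" using integral_unique[OF h] by simp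
  show "(\<lambda>r. fld lam a c (w r) (x r)) integrable_on {0..s}" using h by blast
qed

lemma sol_cont:
  assumes "is_sol lam a c w p x"
  shows "continuous_on {0..} x"
proof -
  let ?f = "\<lambda>r. fld lam a c (w r) (x r)"
  have cT: "continuous_on {0..T} x" for T
  proof -
    have "continuous_on {0..T} (\<lambda>s. p + integral {0..s} ?f)"
      by (intro continuous_intros indefinite_integral_continuous_1)
         (cases "T \<ge> 0", use sol_int(2)[OF assms] in auto)
    then show ?thesis by (rule continuous_on_eq) (use sol_int(1)[OF assms] in auto)
  qed
  show ?thesis unfolding continuous_on_def
  proof
    fix s :: real assume s: "s \<in> {0..}"
    have "(x \<longlongrightarrow> x s) (at s within {0..s+1})"
      using cT[of "s+1"] s unfolding continuous_on_def by auto
    moreover have "at s within {0..} = at s within {0..s+1}"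
      by (rule at_within_nhd[of _ "{..<s+1}"]) auto
    ultimately show "(x \<longlongrightarrow> x s) (at s within {0..})" by simp
  qed
qed

lemma sol_deriv:
  assumes pc: "pc_control Om w" and sol: "is_sol lam a c w p x" and t0: "\<tau> \<ge> 0"
  shows "\<exists>\<delta>>0. \<exists>\<omega>\<in>Om. \<forall>\<sigma>\<in>{\<tau><..<\<tau>+\<delta>}. (x has_vector_derivative fld lam a c \<omega> (x \<sigma>)) (at \<sigma>)"
proof -
  let ?f = "\<lambda>r. fld lam a c (w r) (x r)"
  obtain D where D: "finite D" "\<forall>x y. \<tau> \<le> x \<longrightarrow> x \<le> y \<longrightarrow> y \<le> \<tau>+1 \<longrightarrow> {x..y} \<inter> D = {} \<longrightarrow> w x = w y"
    using pc unfolding pc_control_def by blast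
  obtain d0 where d0: "d0 > 0" "\<forall>z\<in>D. z \<noteq> \<tau> \<longrightarrow> d0 \<le> dist \<tau> z"
    using finite_set_avoid[OF D(1), of \<tau>] by blast
  define \<delta> where "\<delta> = min d0 1"
  have \<delta>: "\<delta> > 0" "\<delta> \<le> 1" "\<delta> \<le> d0" using d0 unfolding \<delta>_def by auto
  define \<omega> where "\<omega> = w (\<tau> + \<delta>/2)"
  have wc: "w \<sigma> = \<omega>" if "\<sigma> \<in> {\<tau><..<\<tau>+\<delta>}" for \<sigma>
  proof -
    have noD: "z \<notin> D" if "z \<in> {\<tau><..<\<tau>+\<delta>}" for z
    proof
      assume "z \<in> D"
      then have "d0 \<le> dist \<tau> z" using d0 that by auto
      then show False using that \<delta> by (auto simp: dist_real_def)
    qed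
    show ?thesis
    proof (cases "\<sigma> \<le> \<tau> + \<delta>/2")
      case True
      have "{\<sigma>..\<tau>+\<delta>/2} \<inter> D = {}" using noD that True \<delta> by fastforce
      then show ?thesis using D(2) True that \<delta> unfolding \<omega>_def by auto
    next
      case False
      have "{\<tau>+\<delta>/2..\<sigma>} \<inter> D = {}" using noD that False \<delta> by fastforce
      then show ?thesis using D(2)[rule_format, of "\<tau>+\<delta>/2" \<sigma>] False that \<delta> unfolding \<omega>_def by auto
    qed
  qed
  have \<omega>Om: "\<omega> \<in> Om" using pc unfolding pc_control_def \<omega>_def by auto
  have xc: "continuous_on {0..} x" by (rule sol_cont[OF sol])
  show ?thesis
  proof (intro exI[of _ \<delta>] conjI \<delta> bexI[OF _ \<omega>Om] ballI)
    fix \<sigma> assume \<sigma>: "\<sigma> \<in> {\<tau><..<\<tau>+\<delta>}"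
    let ?b = "\<tau> + \<delta>"
    have int: "?f integrable_on {0..?b}" using sol_int(2)[OF sol, of ?b] t0 \<delta> by auto
    have xcs: "continuous (at \<sigma>) x"
      by (rule continuous_on_interior[OF xc]) (use \<sigma> t0 in auto)
    have gc: "continuous (at \<sigma> within ({0..?b} - {})) (\<lambda>r. fld lam a c \<omega> (x r))"
      using continuous_within_compose3[OF _ xcs, of "fld lam a c \<omega>"] fld_cont
      by (metis continuous_at_imp_continuous_at_within continuous_on_eq_continuous_within iso_tuple_UNIV_I)
    have fc: "continuous (at \<sigma> within ({0..?b} - {})) ?f"
    proof (rule continuous_transform_within[OF gc, of "min (\<sigma> - \<tau>) (?b - \<sigma>)"])
      show "0 < min (\<sigma> - \<tau>) (?b - \<sigma>)" using \<sigma> by auto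
      show "\<sigma> \<in> {0..?b} - {}" using \<sigma> t0 by auto
      fix x' assume "x' \<in> {0..?b} - {}" "dist x' \<sigma> < min (\<sigma> - \<tau>) (?b - \<sigma>)"
      then have "x' \<in> {\<tau><..<\<tau>+\<delta>}" by (auto simp: dist_real_def)
      then show "fld lam a c \<omega> (x x') = ?f x'" using wc by simp
    qed
    have "((\<lambda>u. integral {0..u} ?f) has_vector_derivative ?f \<sigma>) (at \<sigma> within ({0..?b} - {}))"
      by (rule integral_has_vector_derivative_continuous_at[OF int _ _ fc]) (use \<sigma> t0 in auto)
    moreover have "at \<sigma> within ({0..?b} - {}) = at \<sigma>"
      by (rule at_within_interior) (use \<sigma> t0 in auto)
    ultimately have "((\<lambda>u. p + integral {0..u} ?f) has_vector_derivative ?f \<sigma>) (at \<sigma>)"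
      by (auto intro!: derivative_eq_intros)
    then have "(x has_vector_derivative ?f \<sigma>) (at \<sigma>)"
      by (rule has_vector_derivative_transform_within_open[of _ _ _ "{0<..}"]) (use \<sigma> t0 sol_int(1)[OF sol] in auto)
    then show "(x has_vector_derivative fld lam a c \<omega> (x \<sigma>)) (at \<sigma>)" using wc[OF \<sigma>] by simp
  qed
qed

lemma loc_glob:
  fixes h :: "real \<Rightarrow> real"
  assumes hc: "continuous_on {a..b} h" and ab: "a \<le> b"
    and loc: "\<And>\<tau>. \<tau> \<in> {a..<b} \<Longrightarrow> \<exists>\<delta>>0. \<forall>\<sigma>. \<tau> \<le> \<sigma> \<and> \<sigma> \<le> \<tau>+\<delta> \<longrightarrow> h \<sigma> \<le> h \<tau>"
  shows "h b \<le> h a"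
proof -
  define S where "S = {s \<in> {a..b}. \<forall>r\<in>{a..s}. h r \<le> h a}"
  define m where "m = Sup S"
  have aS: "a \<in> S" using ab unfolding S_def by auto
  have bdd: "bdd_above S" unfolding S_def by (auto intro: bdd_aboveI[of _ b])
  have am: "a \<le> m" unfolding m_def using aS bdd by (simp add: cSup_upper)
  have mb: "m \<le> b" unfolding m_def using aS by (intro cSup_least) (auto simp: S_def)
  define K where "K = {a..b} \<inter> h -` {..h a}"
  have Kc: "closed K" unfolding K_def by (rule continuous_closed_preimage[OF hc]) auto
  have sub: "{a..<m} \<subseteq> K"
  proof
    fix r assume r: "r \<in> {a..<m}"
    then obtain s where "s \<in> S" "r < s" using less_cSupE[of r S] aS unfolding m_def by auto
    then show "r \<in> K" using r unfolding S_def K_def by auto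
  qed
  have "{a..m} \<subseteq> K"
  proof (cases "a < m")
    case True
    then have "closure {a..<m} = {a..m}" by simp
    then show ?thesis using closure_minimal[OF sub Kc] by simp
  next
    case False
    then show ?thesis using am ab unfolding K_def by auto
  qed
  then have mS: "m \<in> S" using am mb unfolding S_def K_def by auto
  show ?thesis
  proof (cases "m < b")
    case True
    obtain \<delta> where \<delta>: "\<delta> > 0" "\<forall>\<sigma>. m \<le> \<sigma> \<and> \<sigma> \<le> m+\<delta> \<longrightarrow> h \<sigma> \<le> h m" using loc[of m] True am by auto
    have "min (m+\<delta>) b \<in> S"
      using mS \<delta> True am unfolding S_def
      by (auto simp: min_def) (smt (verit, ccfv_SIG) atLeastAtMost_iff)+
    then have "min (m+\<delta>) b \<le> m" unfolding m_def using bdd by (simp add: cSup_upper)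
    then show ?thesis using True \<delta> by (auto simp: min_def split: if_splits)
  next
    case False
    then show ?thesis using mS mb unfolding S_def by auto
  qed
qed

definition Ef :: "real \<Rightarrow> real \<Rightarrow> real" where
  "Ef k y = (if k = 0 then y else (exp (k * y) - 1) / k)"

lemma Ef_deriv: "(Ef k has_real_derivative exp (k*y)) (at y)"
proof (cases "k = 0")
  case True
  then show ?thesis unfolding Ef_def by (auto intro!: derivative_eq_intros)
next
  case False
  have "((\<lambda>z. (exp (k*z) - 1)/k) has_real_derivative exp (k*y)) (at y)"
    using False by (auto intro!: derivative_eq_intros)
  then show ?thesis unfolding Ef_def using False by simp
qed

lemma Ef_0[simp]: "Ef k 0 = 0" unfolding Ef_def by simp
lemma Ef_nonneg: "y \<ge> 0 \<Longrightarrow> Ef k y \<ge> 0"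
proof (cases "k = 0")
  case False
  assume y: "y \<ge> 0"
  show ?thesis
  proof (cases "k > 0")
    case True
    then have "exp (k * y) \<ge> 1" using y by simp
    then show ?thesis unfolding Ef_def using True by simp
  next
    case f2: False
    then have "exp (k * y) \<le> 1" using y False by (simp add: mult_nonpos_nonneg)
    then show ?thesis unfolding Ef_def using False f2 by (simp add: divide_nonpos_neg)
  qed
qed (simp add: Ef_def)

lemma V_cont: "(\<And>q. (V has_derivative DV q) (at q)) \<Longrightarrow> continuous_on S V"
  using has_derivative_continuous continuous_at_imp_continuous_on by blast

lemma loc_lyap:
  fixes V :: "real \<times> real \<Rightarrow> real"
  assumes pc: "pc_control Om w" and sol: "is_sol lam a c w p x"
    and Vd: "\<And>q. (V has_derivative DV q) (at q)" and U: "open U"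
    and cond: "\<And>q \<omega>. q \<in> U \<Longrightarrow> \<omega> \<in> Om \<Longrightarrow> DV q (fld lam a c \<omega> q) \<le> -k * V q - g"
    and t0: "\<tau> \<ge> 0" and xU: "x \<tau> \<in> U"
  shows "\<exists>\<delta>>0. \<forall>\<sigma>. \<tau> \<le> \<sigma> \<and> \<sigma> \<le> \<tau>+\<delta> \<longrightarrow>
     exp (k*\<sigma>) * V (x \<sigma>) + g * Ef k \<sigma> \<le> exp (k*\<tau>) * V (x \<tau>) + g * Ef k \<tau>"
proof -
  let ?H = "\<lambda>\<sigma>. exp (k*\<sigma>) * V (x \<sigma>) + g * Ef k \<sigma>"
  obtain \<delta>1 \<omega> where d1: "\<delta>1 > 0" "\<omega> \<in> Om"
    "\<forall>\<sigma>\<in>{\<tau><..<\<tau>+\<delta>1}. (x has_vector_derivative fld lam a c \<omega> (x \<sigma>)) (at \<sigma>)"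
    using sol_deriv[OF pc sol t0] by blast
  have xc: "continuous_on {0..} x" by (rule sol_cont[OF sol])
  obtain e where e: "e > 0" "ball (x \<tau>) e \<subseteq> U" using U xU open_contains_ball by blast
  obtain \<delta>2 where d2: "\<delta>2 > 0" "\<forall>\<sigma>\<in>{0..}. dist \<sigma> \<tau> < \<delta>2 \<longrightarrow> dist (x \<sigma>) (x \<tau>) < e"
    using xc t0 e(1) unfolding continuous_on_iff by (metis atLeast_iff)
  define \<delta> where "\<delta> = min (\<delta>1/2) (\<delta>2/2)"
  have \<delta>: "\<delta> > 0" "\<delta> < \<delta>1" "\<delta> < \<delta>2" using d1 d2 unfolding \<delta>_def by auto
  have inU: "x \<sigma> \<in> U" if "\<tau> \<le> \<sigma>" "\<sigma> \<le> \<tau> + \<delta>" for \<sigma>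
    using d2(2)[rule_format, of \<sigma>] that t0 \<delta> e(2) by (auto simp: dist_real_def dist_commute)
  have Vc: "continuous_on UNIV V" using V_cont[OF Vd] .
  have Hc: "continuous_on {\<tau>..\<sigma>} ?H" if "\<tau> \<le> \<sigma>" for \<sigma>
  proof -
    have "continuous_on {\<tau>..\<sigma>} x" using continuous_on_subset[OF xc] t0 by auto
    moreover have "continuous_on {\<tau>..\<sigma>} (Ef k)"
      using Ef_deriv by (meson DERIV_isCont continuous_at_imp_continuous_on)
    ultimately show ?thesis
      using Vc by (intro continuous_intros) (auto intro: continuous_on_compose2[OF Vc])
  qed
  show ?thesis
  proof (intro exI[of _ \<delta>] conjI \<delta> allI impI)
    fix \<sigma> assume s: "\<tau> \<le> \<sigma> \<and> \<sigma> \<le> \<tau> + \<delta>"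
    show "?H \<sigma> \<le> ?H \<tau>"
    proof (rule DERIV_nonpos_imp_decreasing_open[of \<tau> \<sigma> ?H])
      show "\<tau> \<le> \<sigma>" using s by simp
      show "continuous_on {\<tau>..\<sigma>} ?H" using Hc s by simp
      fix r assume r: "\<tau> < r" "r < \<sigma>"
      let ?X = "fld lam a c \<omega> (x r)"
      have xd: "(x has_vector_derivative ?X) (at r)" using d1(3) r s \<delta> by auto
      have lin: "linear (DV (x r))" using Vd has_derivative_linear by blast
      have "((\<lambda>r. V (x r)) has_derivative (\<lambda>h. DV (x r) (h *\<^sub>R ?X))) (at r)"
        using has_derivative_compose[OF xd[unfolded has_vector_derivative_def] Vd] by (simp add: o_def)
      moreover have "(\<lambda>h. DV (x r) (h *\<^sub>R ?X)) = (\<lambda>h. h * DV (x r) ?X)"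
        using linear_scale[OF lin] by auto
      moreover have "(\<lambda>h. h * DV (x r) ?X) = (*) (DV (x r) ?X)" by (auto simp: mult.commute)
      ultimately have Vxd: "((\<lambda>r. V (x r)) has_real_derivative DV (x r) ?X) (at r)"
        unfolding has_field_derivative_def by metis
      have "(?H has_real_derivative (exp (k*r) * k * V (x r) + exp (k*r) * DV (x r) ?X + g * exp (k*r))) (at r)"
        by (auto intro!: derivative_eq_intros Vxd Ef_deriv)
      moreover have "exp (k*r) * k * V (x r) + exp (k*r) * DV (x r) ?X + g * exp (k*r) \<le> 0"
      proof -
        have "DV (x r) ?X \<le> -k * V (x r) - g" using cond[OF inU d1(2)] r s by auto
        then have "k * V (x r) + DV (x r) ?X + g \<le> 0" by simp
        then have "exp (k*r) * (k * V (x r) + DV (x r) ?X + g) \<le> 0" by (simp add: mult_nonneg_nonpos)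
        then show ?thesis by (simp add: algebra_simps)
      qed
      ultimately show "\<exists>y. (?H has_real_derivative y) (at r) \<and> y \<le> 0" by blast
    qed
  qed
qed

lemma glob_lyap:
  fixes V :: "real \<times> real \<Rightarrow> real"
  assumes pc: "pc_control Om w" and sol: "is_sol lam a c w p x"
    and Vd: "\<And>q. (V has_derivative DV q) (at q)" and U: "open U"
    and cond: "\<And>q \<omega>. q \<in> U \<Longrightarrow> \<omega> \<in> Om \<Longrightarrow> DV q (fld lam a c \<omega> q) \<le> -k * V q - g"
    and xU: "\<And>\<sigma>. \<sigma> \<ge> 0 \<Longrightarrow> x \<sigma> \<in> U" and s: "0 \<le> s1" "s1 \<le> s2"
  shows "exp (k * s2) * V (x s2) + g * Ef k s2 \<le> exp (k * s1) * V (x s1) + g * Ef k s1"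
proof (rule loc_glob[where h = "\<lambda>\<sigma>. exp (k*\<sigma>) * V (x \<sigma>) + g * Ef k \<sigma>"])
  have xc: "continuous_on {s1..s2} x" using continuous_on_subset[OF sol_cont[OF sol]] s by auto
  moreover have "continuous_on {s1..s2} (Ef k)"
    using Ef_deriv by (meson DERIV_isCont continuous_at_imp_continuous_on)
  moreover have Vc: "continuous_on UNIV V" using V_cont[OF Vd] .
  ultimately show "continuous_on {s1..s2} (\<lambda>\<sigma>. exp (k*\<sigma>) * V (x \<sigma>) + g * Ef k \<sigma>)"
    by (intro continuous_intros) (auto intro: continuous_on_compose2[OF Vc])
  show "s1 \<le> s2" using s by simp
  fix \<tau> assume "\<tau> \<in> {s1..<s2}"
  then show "\<exists>\<delta>>0. \<forall>\<sigma>. \<tau> \<le> \<sigma> \<and> \<sigma> \<le> \<tau> + \<delta> \<longrightarrow> exp (k*\<sigma>) * V (x \<sigma>) + g * Ef k \<sigma> \<le> exp (k*\<tau>) * V (x \<tau>) + g * Ef k \<tau>"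
    using loc_lyap[OF pc sol Vd U cond] xU s by auto
qed

lemma glob_lyap0:
  fixes V :: "real \<times> real \<Rightarrow> real"
  assumes pc: "pc_control Om w" and sol: "is_sol lam a c w p x"
    and Vd: "\<And>q. (V has_derivative DV q) (at q)" and U: "open U"
    and cond: "\<And>q \<omega>. q \<in> U \<Longrightarrow> \<omega> \<in> Om \<Longrightarrow> DV q (fld lam a c \<omega> q) \<le> -k * V q - g"
    and xU: "\<And>\<sigma>. \<sigma> \<ge> 0 \<Longrightarrow> x \<sigma> \<in> U" and s: "0 \<le> s"
  shows "exp (k * s) * V (x s) + g * Ef k s \<le> V p"
  using glob_lyap[OF pc sol Vd U cond xU order_refl s] sol unfolding is_sol_def by simp

lemma cs_contra:
  fixes V :: "real \<times> real \<Rightarrow> real"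
  assumes cs: "cs_prop lam a c Om D" and v: "v \<in> D" and Vc: "continuous_on UNIV V"
    and H: "\<And>w x. pc_control Om w \<Longrightarrow> is_sol lam a c w v x \<Longrightarrow>
              \<exists>\<tau>\<ge>0. \<exists>\<theta><V v. \<forall>z\<in>orbit_plus lam a c Om (x \<tau>). V z \<le> \<theta>"
  shows False
proof -
  obtain w x where wx: "pc_control Om w" "is_sol lam a c w v x" "\<forall>\<tau>\<ge>0. x \<tau> \<in> D"
    using cs v unfolding cs_prop_def by blast
  obtain \<tau> \<theta> where t: "\<tau> \<ge> 0" "\<theta> < V v" "\<forall>z\<in>orbit_plus lam a c Om (x \<tau>). V z \<le> \<theta>"
    using H[OF wx(1,2)] by blast
  have "D \<subseteq> closure (orbit_plus lam a c Om (x \<tau>))" using cs wx(3) t(1) unfolding cs_prop_def by blast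
  also have "\<dots> \<subseteq> {z. V z \<le> \<theta>}"
    by (rule closure_minimal) (use t(3) closed_Collect_le[OF Vc continuous_on_const] in auto)
  finally show False using v t(2) by auto
qed

lemma decay_contra:
  fixes V :: "real \<times> real \<Rightarrow> real"
  assumes cs: "cs_prop lam a c Om D" and v: "v \<in> D" and k: "k > 0"
    and Vd: "\<And>q. (V has_derivative DV q) (at q)"
    and cond: "\<And>q \<omega>. \<omega> \<in> Om \<Longrightarrow> DV q (fld lam a c \<omega> q) \<le> -k * V q"
    and Vv: "V v > 0"
  shows False
proof (rule cs_contra[OF cs v V_cont[OF Vd]])
  have gl: "exp (k * s) * V (x s) \<le> V p" if "pc_control Om w" "is_sol lam a c w p x" "s \<ge> 0" for w x p s
    using glob_lyap0[OF that(1,2) Vd open_UNIV, of k 0] cond that(3) by auto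
  fix w x assume wx: "pc_control Om w" "is_sol lam a c w v x"
  let ?\<theta> = "max (exp (-k) * V v) 0"
  have y: "V (x 1) \<le> exp (-k) * V v"
    using gl[OF wx, of 1] by (simp add: exp_minus field_simps)
  have th: "?\<theta> < V v" using Vv k by (auto simp: mult_less_cancel_right1)
  have "\<forall>z\<in>orbit_plus lam a c Om (x 1). V z \<le> ?\<theta>"
  proof
    fix z assume "z \<in> orbit_plus lam a c Om (x 1)"
    then obtain w' x' \<tau>' where z: "pc_control Om w'" "is_sol lam a c w' (x 1) x'" "\<tau>' \<ge> 0" "x' \<tau>' = z"
      unfolding orbit_plus_def by blast
    have "exp (k * \<tau>') * V z \<le> V (x 1)" using gl[OF z(1,2,3)] z(4) by simp
    moreover have "exp (k * \<tau>') \<ge> 1" using k z(3) by simp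
    ultimately have "V z \<le> max (V (x 1)) 0"
      by (smt (verit, ccfv_threshold) mult_le_cancel_right1)
    then show "V z \<le> ?\<theta>" using y by auto
  qed
  then show "\<exists>\<tau>\<ge>0. \<exists>\<theta><V v. \<forall>z\<in>orbit_plus lam a c Om (x \<tau>). V z \<le> \<theta>"
    using th by (intro exI[of _ "1::real"]) auto
qed

lemma cs_unique:
  assumes "cs_prop lam a c Om C0" "\<And>D. cs_prop lam a c Om D \<Longrightarrow> D \<subseteq> C0"
  shows "(\<exists>!C. control_set lam a c Om C) \<and> (\<forall>C. control_set lam a c Om C \<longrightarrow> C = C0)"
proof -
  have c0: "control_set lam a c Om C0" unfolding control_set_def using assms by blast
  have "C = C0" if "control_set lam a c Om C" for C
    using that assms unfolding control_set_def by blast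
  then show ?thesis using c0 by blast
qed

lemma flw_a0: "flw lam 0 c w \<tau> p = (fst p + w*\<tau>, -(c/lam)*w + (snd p + (c/lam)*w) * exp (lam*\<tau>))"
  unfolding flw_def Ac_def Bc_def by (simp add: field_simps)

lemma strip_bounds:
  fixes k w wm wp :: real
  assumes "w \<in> {wm..wp}"
  shows "min (k*wm) (k*wp) \<le> k*w" "k*w \<le> max (k*wm) (k*wp)"
  using assms by (cases "k \<ge> 0"; simp add: min_def max_def mult_left_mono mult_left_mono_neg)+

lemma strip_sign:
  fixes k wm wp :: real
  assumes "k \<noteq> 0" "wm < 0" "0 < wp"
  shows "min (k*wm) (k*wp) < 0" "max (k*wm) (k*wp) > 0"
  using assms by (cases "k > 0"; simp add: min_def max_def mult_pos_neg mult_neg_neg mult_neg_pos)+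

lemma img_strip:
  fixes k wm wp :: real
  assumes "k \<noteq> 0" "wm < wp"
  shows "(\<lambda>w. k * w) ` {wm..wp} = {min (k*wm) (k*wp) .. max (k*wm) (k*wp)}"
proof
  show "(\<lambda>w. k * w) ` {wm..wp} \<subseteq> {min (k*wm) (k*wp) .. max (k*wm) (k*wp)}"
    using strip_bounds by auto
  show "{min (k*wm) (k*wp) .. max (k*wm) (k*wp)} \<subseteq> (\<lambda>w. k * w) ` {wm..wp}"
  proof
    fix t assume t: "t \<in> {min (k*wm) (k*wp) .. max (k*wm) (k*wp)}"
    have "t/k \<in> {wm..wp}"
    proof (cases "k > 0")
      case True
      then show ?thesis using t assms by (auto simp: min_def max_def field_simps split: if_splits)
    next
      case False
      then have "k < 0" using assms by auto
      then show ?thesis using t assms by (auto simp: min_def max_def field_simps split: if_splits)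
    qed
    moreover have "t = k * (t/k)" using assms by simp
    ultimately show "t \<in> (\<lambda>w. k * w) ` {wm..wp}" by blast
  qed
qed

lemma dist_same_fst: "dist (a, b) (a, d) = \<bar>b - d\<bar>"
  by (simp add: dist_Pair_Pair dist_real_def)

lemma exp_small:
  fixes e K :: real
  assumes "e > 0" "K > 0" "lam < 0"
  shows "exp (lam * (\<bar>ln (e/(2*K))\<bar> / (-lam))) \<le> e/(2*K)" "\<bar>ln (e/(2*K))\<bar> / (-lam) \<ge> 0"
proof -
  have "lam * (\<bar>ln (e/(2*K))\<bar> / (-lam)) = - \<bar>ln (e/(2*K))\<bar>" using assms by (simp add: field_simps)
  also have "\<dots> \<le> ln (e/(2*K))" by simp
  finally have "exp (lam * (\<bar>ln (e/(2*K))\<bar> / (-lam))) \<le> exp (ln (e/(2*K)))" by simp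
  then show "exp (lam * (\<bar>ln (e/(2*K))\<bar> / (-lam))) \<le> e/(2*K)" using assms by simp
  show "\<bar>ln (e/(2*K))\<bar> / (-lam) \<ge> 0" by (rule divide_nonneg_pos) (use assms in auto)
qed

lemma p1n_E3:
  fixes lam c wm wp :: real
  assumes lam: "lam < 0" and c: "c \<noteq> 0" and w: "wm < 0" "0 < wp"
    and y: "y \<in> UNIV \<times> ((\<lambda>w. - (c / lam) * w) ` {wm..wp})"
  shows "y \<in> Rc lam 0 c {wm..wp} v"
proof (rule Rc_approx)
  fix e :: real assume e: "e > 0"
  define k where "k = -(c/lam)"
  have "snd y \<in> (\<lambda>w. - (c / lam) * w) ` {wm..wp}" using y by (simp add: mem_Times_iff)
  then obtain \<omega>1 where o1: "snd y = k*\<omega>1" "\<omega>1 \<in> {wm..wp}" unfolding k_def by blast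
  define s1 where "s1 = fst y"
  have y1: "y = (s1, k*\<omega>1)" "\<omega>1 \<in> {wm..wp}" using o1 unfolding s1_def by (auto simp: prod_eq_iff)
  obtain s0 t0 where v: "v = (s0, t0)" by (cases v)
  define K where "K = \<bar>t0\<bar> + 3*\<bar>k\<bar>*(wp - wm) + 1"
  have K: "K > 0" unfolding K_def using w by (auto intro!: add_nonneg_pos)
  define T where "T = \<bar>ln (e/(2*K))\<bar> / (-lam)"
  have T: "T \<ge> 0" "exp (lam*T) \<le> e/(2*K)" using exp_small[OF e K lam] unfolding T_def by auto
  define sst where "sst = s1 - \<omega>1*T"
  define \<omega>d where "\<omega>d = (if sst \<ge> s0 then wp else wm)"
  define \<tau>1 where "\<tau>1 = (sst - s0)/\<omega>d"
  have \<omega>d: "\<omega>d \<in> {wm..wp}" "\<omega>d \<noteq> 0" "\<tau>1 \<ge> 0" using w unfolding \<omega>d_def \<tau>1_def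
    by (auto simp: divide_nonpos_neg)
  define q1 where "q1 = flw lam 0 c \<omega>d \<tau>1 v"
  define q2 where "q2 = flw lam 0 c \<omega>1 T q1"
  have r: "reach_c lam 0 c {wm..wp} v q2" unfolding q2_def q1_def
    using \<omega>d y1 T by (intro rc_step rc_refl) auto
  have kc: "c/lam = -k" unfolding k_def by simp
  have fq1: "fst q1 = sst" unfolding q1_def flw_a0 v \<tau>1_def using \<omega>d by simp
  define t' where "t' = snd q1"
  have t': "t' = k*\<omega>d + (t0 - k*\<omega>d) * exp (lam*\<tau>1)" unfolding t'_def q1_def flw_a0 v kc by simp
  have q2: "q2 = (s1, k*\<omega>1 + (t' - k*\<omega>1) * exp (lam*T))"
    unfolding q2_def flw_a0 kc t'_def fq1 sst_def by simp
  have bw: "\<bar>\<omega>\<bar> \<le> wp - wm" if "\<omega> \<in> {wm..wp}" for \<omega> using that w by auto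
  have "exp (lam*\<tau>1) \<le> 1" using lam \<omega>d(3) by (simp add: mult_nonpos_nonneg)
  then have "\<bar>(t0 - k*\<omega>d) * exp (lam*\<tau>1)\<bar> \<le> \<bar>t0 - k*\<omega>d\<bar>"
    by (simp add: abs_mult mult_left_le)
  moreover have "\<bar>k*\<omega>d\<bar> \<le> \<bar>k\<bar>*(wp - wm)" "\<bar>k*\<omega>1\<bar> \<le> \<bar>k\<bar>*(wp - wm)"
    using bw[OF \<omega>d(1)] bw[OF y1(2)] by (auto simp: abs_mult mult_left_mono)
  ultimately have tb: "\<bar>t' - k*\<omega>1\<bar> \<le> K" unfolding t' K_def by linarith
  have "dist q2 y = \<bar>t' - k*\<omega>1\<bar> * exp (lam*T)" unfolding q2 y1 dist_same_fst by (simp add: abs_mult)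
  also have "\<dots> \<le> K * (e/(2*K))" using tb T(2) by (intro mult_mono) auto
  also have "\<dots> < e" using K e by simp
  finally show "\<exists>z\<in>Rc lam 0 c {wm..wp} v. dist z y < e" using Rc_reach[OF r] by blast
qed

lemma snd_deriv: "((\<lambda>q::real\<times>real. snd q - thi) has_derivative (\<lambda>h. snd h)) (at q)"
  by (auto intro!: derivative_eq_intros)
lemma snd_deriv2: "((\<lambda>q::real\<times>real. tlo - snd q) has_derivative (\<lambda>h. - snd h)) (at q)"
  by (auto intro!: derivative_eq_intros)

lemma p1_U_neg:
  fixes lam c wm wp :: real
  assumes lam: "lam < 0" and c: "c \<noteq> 0" and w: "wm < 0" "0 < wp"
    and cs: "cs_prop lam 0 c {wm..wp} D"
  shows "D \<subseteq> UNIV \<times> {min (-(c/lam)*wm) (-(c/lam)*wp) .. max (-(c/lam)*wm) (-(c/lam)*wp)}"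
proof
  fix v assume v: "v \<in> D"
  define k where "k = -(c/lam)"
  define tlo where "tlo = min (k*wm) (k*wp)"
  define thi where "thi = max (k*wm) (k*wp)"
  have ck: "c = -lam * k" unfolding k_def using lam by simp
  have b: "tlo \<le> k*\<omega>" "k*\<omega> \<le> thi" if "\<omega> \<in> {wm..wp}" for \<omega>
    using strip_bounds[OF that, of k] unfolding tlo_def thi_def by auto
  have "\<not> snd v > thi"
  proof
    assume "snd v > thi"
    show False
    proof (rule decay_contra[OF cs v, of "-lam" "\<lambda>q. snd q - thi" "\<lambda>q h. snd h"])
      show "0 < -lam" using lam by simp
      show "((\<lambda>q. snd q - thi) has_derivative (\<lambda>h. snd h)) (at q)" for q by (auto intro!: derivative_eq_intros)
      show "snd v - thi > 0" using \<open>snd v > thi\<close> by simp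
      fix q \<omega> assume o: "\<omega> \<in> {wm..wp}"
      have "-lam * (k*\<omega>) \<le> -lam * thi" using b(2)[OF o] lam by (intro mult_left_mono) auto
      then show "snd (fld lam 0 c \<omega> q) \<le> - (-lam) * (snd q - thi)"
        unfolding fld_def ck by (simp add: algebra_simps)
    qed
  qed
  moreover have "\<not> snd v < tlo"
  proof
    assume "snd v < tlo"
    show False
    proof (rule decay_contra[OF cs v, of "-lam" "\<lambda>q. tlo - snd q" "\<lambda>q h. - snd h"])
      show "0 < -lam" using lam by simp
      show "((\<lambda>q. tlo - snd q) has_derivative (\<lambda>h. - snd h)) (at q)" for q by (auto intro!: derivative_eq_intros)
      show "tlo - snd v > 0" using \<open>snd v < tlo\<close> by simp
      fix q \<omega> assume o: "\<omega> \<in> {wm..wp}"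
      have "-lam * tlo \<le> -lam * (k*\<omega>)" using b(1)[OF o] lam by (intro mult_left_mono) auto
      then show "- snd (fld lam 0 c \<omega> q) \<le> - (-lam) * (tlo - snd q)"
        unfolding fld_def ck by (simp add: algebra_simps)
    qed
  qed
  ultimately show "v \<in> UNIV \<times> {min (-(c/lam)*wm) (-(c/lam)*wp) .. max (-(c/lam)*wm) (-(c/lam)*wp)}"
    unfolding tlo_def thi_def k_def by (cases v) auto
qed

lemma part1_neg:
  fixes lam c wm wp :: real
  assumes lam: "lam < 0" and c: "c \<noteq> 0" and w: "wm < 0" "0 < wp"
  shows "(\<exists>!C. control_set lam 0 c {wm..wp} C) \<and>
     (\<forall>C. control_set lam 0 c {wm..wp} C \<longrightarrow>
        closure C = UNIV \<times> ((\<lambda>w. - (c / lam) * w) ` {wm..wp}) \<and> closed C)"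
proof -
  define k where "k = -(c/lam)"
  have k0: "k \<noteq> 0" unfolding k_def using lam c by simp
  define C0 :: "(real \<times> real) set" where "C0 = UNIV \<times> ((\<lambda>w. - (c / lam) * w) ` {wm..wp})"
  have C0i: "C0 = UNIV \<times> {min (k*wm) (k*wp) .. max (k*wm) (k*wp)}"
    unfolding C0_def using img_strip[OF k0, of wm wp] w unfolding k_def by simp
  have tlo: "min (k*wm) (k*wp) < 0" "max (k*wm) (k*wp) > 0" using strip_sign[OF k0 w] by auto
  have cl: "closed C0" unfolding C0i by (intro closed_Times) auto
  have cs: "cs_prop lam 0 c {wm..wp} C0"
    unfolding cs_prop_def
  proof (intro conjI ballI)
    show "C0 \<noteq> {}" unfolding C0i using tlo by auto
    fix v assume v: "v \<in> C0"
    show "C0 \<subseteq> closure (orbit_plus lam 0 c {wm..wp} v)"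
      using p1n_E3[OF lam c w, of _ v] Rc_orbit[of lam "{wm..wp}" 0 c v] lam w unfolding C0_def by auto
    have inv: "flw lam 0 c 0 \<tau> v \<in> C0" if "\<tau> \<ge> 0" for \<tau>
    proof -
      have e: "0 < exp (lam*\<tau>)" "exp (lam*\<tau>) \<le> 1" using lam that by (auto simp: mult_nonpos_nonneg)
      have "snd v * exp (lam*\<tau>) \<in> {min (k*wm) (k*wp) .. max (k*wm) (k*wp)}"
      proof (cases "snd v \<ge> 0")
        case True
        then have "0 \<le> snd v * exp (lam*\<tau>)" "snd v * exp (lam*\<tau>) \<le> snd v" using e by (auto simp: mult_left_le)
        then show ?thesis using v tlo unfolding C0i by (auto simp: mem_Times_iff)
      next
        case False
        then have "snd v * exp (lam*\<tau>) \<le> 0" "snd v \<le> snd v * exp (lam*\<tau>)" using e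
          by (auto simp: mult_nonpos_nonneg mult_le_cancel_left1)
        then show ?thesis using v tlo unfolding C0i by (auto simp: mem_Times_iff)
      qed
      then show ?thesis unfolding C0i flw_a0 by (simp add: mem_Times_iff)
    qed
    show "\<exists>w x. pc_control {wm..wp} w \<and> is_sol lam 0 c w v x \<and> (\<forall>\<tau>\<ge>0. x \<tau> \<in> C0)"
      using pc_const[of 0 "{wm..wp}"] const_sol[of lam 0 c 0 v] inv w lam by (intro exI conjI) auto
  qed
  have U: "D \<subseteq> C0" if "cs_prop lam 0 c {wm..wp} D" for D
    using p1_U_neg[OF lam c w that] unfolding C0i k_def by simp
  have "closure C0 = C0" using cl by simp
  with cs_unique[OF cs U] cl show ?thesis unfolding C0_def by metis
qed

lemma transfer_gen:
  fixes lam c \<omega> t0 t1 :: real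
  assumes lam: "lam > 0" and ne: "t0 \<noteq> -(c/lam)*\<omega>" and r: "(t1 + (c/lam)*\<omega>)/(t0 + (c/lam)*\<omega>) \<ge> 1"
  shows "flw lam 0 c \<omega> (ln ((t1 + (c/lam)*\<omega>)/(t0 + (c/lam)*\<omega>)) / lam) (s,t0)
           = (s + \<omega> * (ln ((t1 + (c/lam)*\<omega>)/(t0 + (c/lam)*\<omega>)) / lam), t1)"
    "ln ((t1 + (c/lam)*\<omega>)/(t0 + (c/lam)*\<omega>)) / lam \<ge> 0"
proof -
  let ?r = "(t1 + (c/lam)*\<omega>)/(t0 + (c/lam)*\<omega>)"
  have "exp (lam * (ln ?r / lam)) = ?r" using lam r by simp
  moreover have "t0 + (c/lam)*\<omega> \<noteq> 0" using ne by (auto simp: algebra_simps)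
  ultimately show "flw lam 0 c \<omega> (ln ?r / lam) (s,t0) = (s + \<omega> * (ln ?r / lam), t1)"
    unfolding flw_a0 by (simp add: field_simps)
  show "ln ?r / lam \<ge> 0" using lam r by simp
qed

lemma transfer:
  fixes lam c wm wp t0 t1 :: real
  assumes lam: "lam > 0" and w: "wm < wp"
    and t0: "t0 \<in> {min (-(c/lam)*wm) (-(c/lam)*wp) <..< max (-(c/lam)*wm) (-(c/lam)*wp)}"
    and t1: "t1 \<in> {min (-(c/lam)*wm) (-(c/lam)*wp) <..< max (-(c/lam)*wm) (-(c/lam)*wp)}"
  shows "\<exists>\<omega>\<in>{wm..wp}. \<exists>\<tau>\<ge>0. \<forall>s. flw lam 0 c \<omega> \<tau> (s,t0) = (s + \<omega>*\<tau>, t1)"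
proof -
  define k where "k = -(c/lam)"
  have ck: "c/lam = -k" unfolding k_def by simp
  define wlo where "wlo = (if k*wm \<le> k*wp then wm else wp)"
  define whi where "whi = (if k*wm \<le> k*wp then wp else wm)"
  have wl: "wlo \<in> {wm..wp}" "whi \<in> {wm..wp}" unfolding wlo_def whi_def using w by auto
  have kl: "k*wlo = min (k*wm) (k*wp)" "k*whi = max (k*wm) (k*wp)" unfolding wlo_def whi_def by auto
  show ?thesis
  proof (cases "t0 \<le> t1")
    case True
    have "t0 \<noteq> -(c/lam)*wlo" "(t1 + (c/lam)*wlo)/(t0 + (c/lam)*wlo) \<ge> 1" using t0 t1 True kl unfolding k_def
      by auto
    then show ?thesis using transfer_gen[OF lam, of t0 c wlo t1] wl by blast
  next
    case False
    have e1: "t0 + (c/lam)*whi = t0 - k*whi" "t1 + (c/lam)*whi = t1 - k*whi" unfolding k_def by auto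
    have h: "t0 - k*whi < 0" "t1 - k*whi \<le> t0 - k*whi" using t0 False kl unfolding k_def by auto
    have "t0 \<noteq> -(c/lam)*whi" using h unfolding k_def by auto
    moreover have "(t1 + (c/lam)*whi)/(t0 + (c/lam)*whi) \<ge> 1" unfolding e1 using h by (simp add: divide_simps)
    ultimately have "t0 \<noteq> -(c/lam)*whi" "(t1 + (c/lam)*whi)/(t0 + (c/lam)*whi) \<ge> 1" by auto
    then show ?thesis using transfer_gen[OF lam, of t0 c whi t1] wl by blast
  qed
qed

lemma level_in:
  fixes k wm wp \<omega> :: real
  assumes "k \<noteq> 0" "\<omega> \<in> {wm<..<wp}"
  shows "k*\<omega> \<in> {min (k*wm) (k*wp) <..< max (k*wm) (k*wp)}"
proof (cases "k > 0")
  case True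
  then show ?thesis using assms by (auto simp: min_def max_def mult_strict_left_mono)
next
  case False
  then have "k < 0" using assms by auto
  then show ?thesis using assms by (auto simp: min_def max_def mult_strict_left_mono_neg)
qed

lemma level_inv:
  fixes k wm wp t :: real
  assumes "k \<noteq> 0" "t \<in> {min (k*wm) (k*wp) <..< max (k*wm) (k*wp)}" "wm < wp"
  shows "t/k \<in> {wm<..<wp}"
proof (cases "k > 0")
  case True
  then show ?thesis using assms by (auto simp: min_def max_def field_simps split: if_splits)
next
  case False
  then have "k < 0" using assms by auto
  then show ?thesis using assms by (auto simp: min_def max_def field_simps split: if_splits)
qed

lemma hold_a0: "lam \<noteq> 0 \<Longrightarrow> flw lam 0 c \<omega> T (s, -(c/lam)*\<omega>) = (s + \<omega>*T, -(c/lam)*\<omega>)"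
  unfolding flw_a0 by simp

lemma p1p_E3:
  fixes lam c wm wp :: real
  assumes lam: "lam > 0" and c: "c \<noteq> 0" and w: "wm < 0" "0 < wp"
    and v: "v \<in> UNIV \<times> {min (-(c/lam)*wm) (-(c/lam)*wp) <..< max (-(c/lam)*wm) (-(c/lam)*wp)}"
    and y: "y \<in> UNIV \<times> {min (-(c/lam)*wm) (-(c/lam)*wp) <..< max (-(c/lam)*wm) (-(c/lam)*wp)}"
  shows "reach_c lam 0 c {wm..wp} v y"
proof -
  define k where "k = -(c/lam)"
  have k0: "k \<noteq> 0" unfolding k_def using lam c by simp
  let ?I = "{min (k*wm) (k*wp) <..< max (k*wm) (k*wp)}"
  obtain s0 t0 where v0: "v = (s0, t0)" "t0 \<in> ?I" using v unfolding k_def by (cases v) auto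
  obtain s1 t1 where y1: "y = (s1, t1)" "t1 \<in> ?I" using y unfolding k_def by (cases y) auto
  define tp where "tp = k*(wp/2)"
  define tm where "tm = k*(wm/2)"
  have tpm: "tp \<in> ?I" "tm \<in> ?I" unfolding tp_def tm_def
    using level_in[OF k0, of "wp/2" wm wp] level_in[OF k0, of "wm/2" wm wp] w by auto
  obtain \<omega>a \<tau>a where a: "\<omega>a \<in> {wm..wp}" "\<tau>a \<ge> 0" "\<forall>s. flw lam 0 c \<omega>a \<tau>a (s,t0) = (s + \<omega>a*\<tau>a, tp)"
    using transfer[OF lam _ v0(2)[unfolded k_def] tpm(1)[unfolded k_def]] w by auto
  obtain \<omega>b \<tau>b where b: "\<omega>b \<in> {wm..wp}" "\<tau>b \<ge> 0" "\<forall>s. flw lam 0 c \<omega>b \<tau>b (s,tp) = (s + \<omega>b*\<tau>b, tm)"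
    using transfer[OF lam _ tpm(1)[unfolded k_def] tpm(2)[unfolded k_def]] w by auto
  obtain \<omega>c \<tau>c where cc: "\<omega>c \<in> {wm..wp}" "\<tau>c \<ge> 0" "\<forall>s. flw lam 0 c \<omega>c \<tau>c (s,tm) = (s + \<omega>c*\<tau>c, t1)"
    using transfer[OF lam _ tpm(2)[unfolded k_def] y1(2)[unfolded k_def]] w by auto
  define R where "R = s1 - s0 - \<omega>a*\<tau>a - \<omega>b*\<tau>b - \<omega>c*\<tau>c"
  define T1 where "T1 = (if R \<ge> 0 then 2*R/wp else 0)"
  define T2 where "T2 = (if R \<ge> 0 then 0 else 2*R/wm)"
  have T: "T1 \<ge> 0" "T2 \<ge> 0" "(wp/2)*T1 + (wm/2)*T2 = R" unfolding T1_def T2_def using w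
    by (auto simp: divide_nonpos_neg)
  have hp: "flw lam 0 c (wp/2) T1 (s, tp) = (s + (wp/2)*T1, tp)" for s
    using hold_a0[of lam c "wp/2" T1 s] lam unfolding tp_def k_def by simp
  have hm: "flw lam 0 c (wm/2) T2 (s, tm) = (s + (wm/2)*T2, tm)" for s
    using hold_a0[of lam c "wm/2" T2 s] lam unfolding tm_def k_def by simp
  define q1 where "q1 = flw lam 0 c \<omega>a \<tau>a v"
  define q2 where "q2 = flw lam 0 c (wp/2) T1 q1"
  define q3 where "q3 = flw lam 0 c \<omega>b \<tau>b q2"
  define q4 where "q4 = flw lam 0 c (wm/2) T2 q3"
  define q5 where "q5 = flw lam 0 c \<omega>c \<tau>c q4"
  have r: "reach_c lam 0 c {wm..wp} v q5" unfolding q5_def q4_def q3_def q2_def q1_def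
    using a b cc T w by (intro rc_step rc_refl) auto
  have "q5 = (s0 + \<omega>a*\<tau>a + (wp/2)*T1 + \<omega>b*\<tau>b + (wm/2)*T2 + \<omega>c*\<tau>c, t1)"
    unfolding q5_def q4_def q3_def q2_def q1_def v0(1) by (simp add: a(3) hp b(3) hm cc(3))
  also have "\<dots> = y" unfolding y1(1) using T(3) unfolding R_def by simp
  finally show ?thesis using r by simp
qed

lemma p1p_contra:
  fixes lam c wm wp thi g :: real and V :: "real \<times> real \<Rightarrow> real" and P :: "real \<times> real \<Rightarrow> bool"
  assumes cs: "cs_prop lam 0 c {wm..wp} D" and v: "v \<in> D" and Pv: "P v" and g: "g > 0"
    and Vc: "continuous_on UNIV V"
    and inv: "\<And>w x p \<sigma>. pc_control {wm..wp} w \<Longrightarrow> is_sol lam 0 c w p x \<Longrightarrow> P p \<Longrightarrow> \<sigma> \<ge> 0 \<Longrightarrow> P (x \<sigma>)"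
    and grow: "\<And>w x p \<sigma>. pc_control {wm..wp} w \<Longrightarrow> is_sol lam 0 c w p x \<Longrightarrow> P p \<Longrightarrow> \<sigma> \<ge> 0 \<Longrightarrow> V (x \<sigma>) + g*\<sigma> \<le> V p"
  shows False
proof (rule cs_contra[OF cs v Vc])
  fix w x assume wx: "pc_control {wm..wp} w" "is_sol lam 0 c w v x"
  have y: "V (x 1) \<le> V v - g" using grow[OF wx Pv, of 1] by simp
  have Py: "P (x 1)" using inv[OF wx Pv, of 1] by simp
  have "\<forall>z\<in>orbit_plus lam 0 c {wm..wp} (x 1). V z \<le> V v - g"
  proof
    fix z assume "z \<in> orbit_plus lam 0 c {wm..wp} (x 1)"
    then obtain w' x' \<tau>' where z: "pc_control {wm..wp} w'" "is_sol lam 0 c w' (x 1) x'" "\<tau>' \<ge> 0" "x' \<tau>' = z"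
      unfolding orbit_plus_def by blast
    have "V z + g*\<tau>' \<le> V (x 1)" using grow[OF z(1,2) Py z(3)] z(4) by simp
    moreover have "g*\<tau>' \<ge> 0" using g z(3) by simp
    ultimately show "V z \<le> V v - g" using y by linarith
  qed
  then show "\<exists>\<tau>\<ge>0. \<exists>\<theta><V v. \<forall>z\<in>orbit_plus lam 0 c {wm..wp} (x \<tau>). V z \<le> \<theta>"
    using g by (intro exI[of _ "1::real"] conjI exI[of _ "V v - g"]) auto
qed

lemma p1p_U:
  fixes lam c wm wp :: real
  assumes lam: "lam > 0" and c: "c \<noteq> 0" and w: "wm < 0" "0 < wp"
    and cs: "cs_prop lam 0 c {wm..wp} D"
  shows "D \<subseteq> UNIV \<times> {min (-(c/lam)*wm) (-(c/lam)*wp) <..< max (-(c/lam)*wm) (-(c/lam)*wp)}"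
proof
  fix v assume v: "v \<in> D"
  define k where "k = -(c/lam)"
  have k0: "k \<noteq> 0" unfolding k_def using lam c by simp
  define tlo where "tlo = min (k*wm) (k*wp)"
  define thi where "thi = max (k*wm) (k*wp)"
  have sg: "tlo < 0" "thi > 0" using strip_sign[OF k0 w] unfolding tlo_def thi_def by auto
  have ck: "c = -lam * k" unfolding k_def using lam by simp
  have b: "tlo \<le> k*\<omega>" "k*\<omega> \<le> thi" if "\<omega> \<in> {wm..wp}" for \<omega>
    using strip_bounds[OF that, of k] unfolding tlo_def thi_def by auto
  have "\<not> snd v \<ge> thi"
  proof
    assume A: "snd v \<ge> thi"
    show False
    proof (rule p1p_contra[OF cs v, of "\<lambda>q. snd q \<ge> thi" "lam*thi/2" "\<lambda>q. c * fst q - snd q"])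
      show "thi \<le> snd v" by (rule A)
      show "0 < lam*thi/2" using lam sg by simp
      show "continuous_on UNIV (\<lambda>q::real\<times>real. c * fst q - snd q)" by (intro continuous_intros)
      have inv: "thi \<le> snd (x \<sigma>)" if h: "pc_control {wm..wp} w" "is_sol lam 0 c w p x" "thi \<le> snd p" "\<sigma> \<ge> 0" for w x p \<sigma>
      proof -
        have "exp (-lam * \<sigma>) * (thi - snd (x \<sigma>)) + 0 * Ef (-lam) \<sigma> \<le> thi - snd p"
        proof (rule glob_lyap0[OF h(1,2), where DV = "\<lambda>q h. - snd h" and U = UNIV])
          show "((\<lambda>q. thi - snd q) has_derivative (\<lambda>h. - snd h)) (at q)" for q
            by (auto intro!: derivative_eq_intros)
          fix q \<omega> assume o: "\<omega> \<in> {wm..wp}"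
          have "lam * (k*\<omega>) \<le> lam * thi" using b(2)[OF o] lam by (intro mult_left_mono) auto
          then show "- snd (fld lam 0 c \<omega> q) \<le> - (-lam) * (thi - snd q) - 0"
            unfolding fld_def ck by (simp add: algebra_simps)
        qed (use h in auto)
        then have "exp (-lam * \<sigma>) * (thi - snd (x \<sigma>)) \<le> 0" using h(3) by simp
        then show ?thesis by (simp add: mult_le_0_iff)
      qed
      show "thi \<le> snd (x \<sigma>)" if "pc_control {wm..wp} w" "is_sol lam 0 c w p x" "thi \<le> snd p" "\<sigma> \<ge> 0" for w x p \<sigma>
        using inv[OF that] .
      fix w x p \<sigma> assume h: "pc_control {wm..wp} w" "is_sol lam 0 c w p x" "thi \<le> snd p" "(\<sigma>::real) \<ge> 0"
      have "exp (0 * \<sigma>) * (c * fst (x \<sigma>) - snd (x \<sigma>)) + (lam*thi/2) * Ef 0 \<sigma> \<le> c * fst p - snd p"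
      proof (rule glob_lyap0[OF h(1,2), where DV = "\<lambda>q h. c * fst h - snd h" and U = "{q. snd q > thi/2}"])
        show "((\<lambda>q. c * fst q - snd q) has_derivative (\<lambda>h. c * fst h - snd h)) (at q)" for q
          by (auto intro!: derivative_eq_intros)
        show "open {q::real\<times>real. snd q > thi/2}" by (intro open_Collect_less continuous_intros)
        fix q :: "real\<times>real" and \<omega> assume q: "q \<in> {q. snd q > thi/2}"
        then have "lam * (thi/2) \<le> lam * snd q" using lam by (intro mult_left_mono) auto
        then show "c * fst (fld lam 0 c \<omega> q) - snd (fld lam 0 c \<omega> q) \<le> - 0 * (c * fst q - snd q) - lam*thi/2"
          unfolding fld_def by (simp add: algebra_simps)
      next
        fix s :: real assume "s \<ge> 0"
        then show "x s \<in> {q. snd q > thi/2}" using inv[OF h(1,2,3)] sg by fastforce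
      qed (use h in auto)
      then show "c * fst (x \<sigma>) - snd (x \<sigma>) + lam * thi / 2 * \<sigma> \<le> c * fst p - snd p"
        by (simp add: Ef_def)
    qed
  qed
  moreover have "\<not> snd v \<le> tlo"
  proof
    assume A: "snd v \<le> tlo"
    show False
    proof (rule p1p_contra[OF cs v, of "\<lambda>q. snd q \<le> tlo" "-lam*tlo/2" "\<lambda>q. snd q - c * fst q"])
      show "snd v \<le> tlo" by (rule A)
      show "0 < -lam*tlo/2" using lam sg by (simp add: mult_pos_neg)
      show "continuous_on UNIV (\<lambda>q::real\<times>real. snd q - c * fst q)" by (intro continuous_intros)
      have inv: "snd (x \<sigma>) \<le> tlo" if h: "pc_control {wm..wp} w" "is_sol lam 0 c w p x" "snd p \<le> tlo" "\<sigma> \<ge> 0" for w x p \<sigma>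
      proof -
        have "exp (-lam * \<sigma>) * (snd (x \<sigma>) - tlo) + 0 * Ef (-lam) \<sigma> \<le> snd p - tlo"
        proof (rule glob_lyap0[OF h(1,2), where DV = "\<lambda>q h. snd h" and U = UNIV])
          show "((\<lambda>q. snd q - tlo) has_derivative (\<lambda>h. snd h)) (at q)" for q
            by (auto intro!: derivative_eq_intros)
          fix q \<omega> assume o: "\<omega> \<in> {wm..wp}"
          have "lam * tlo \<le> lam * (k*\<omega>)" using b(1)[OF o] lam by (intro mult_left_mono) auto
          then show "snd (fld lam 0 c \<omega> q) \<le> - (-lam) * (snd q - tlo) - 0"
            unfolding fld_def ck by (simp add: algebra_simps)
        qed (use h in auto)
        then have "exp (-lam * \<sigma>) * (snd (x \<sigma>) - tlo) \<le> 0" using h(3) by simp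
        then show ?thesis by (simp add: mult_le_0_iff)
      qed
      show "snd (x \<sigma>) \<le> tlo" if "pc_control {wm..wp} w" "is_sol lam 0 c w p x" "snd p \<le> tlo" "\<sigma> \<ge> 0" for w x p \<sigma>
        using inv[OF that] .
      fix w x p \<sigma> assume h: "pc_control {wm..wp} w" "is_sol lam 0 c w p x" "snd p \<le> tlo" "(\<sigma>::real) \<ge> 0"
      have "exp (0 * \<sigma>) * (snd (x \<sigma>) - c * fst (x \<sigma>)) + (-lam*tlo/2) * Ef 0 \<sigma> \<le> snd p - c * fst p"
      proof (rule glob_lyap0[OF h(1,2), where DV = "\<lambda>q h. snd h - c * fst h" and U = "{q. snd q < tlo/2}"])
        show "((\<lambda>q. snd q - c * fst q) has_derivative (\<lambda>h. snd h - c * fst h)) (at q)" for q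
          by (auto intro!: derivative_eq_intros)
        show "open {q::real\<times>real. snd q < tlo/2}" by (intro open_Collect_less continuous_intros)
        fix q :: "real\<times>real" and \<omega> assume q: "q \<in> {q. snd q < tlo/2}"
        then have "lam * snd q \<le> lam * (tlo/2)" using lam by (intro mult_left_mono) auto
        then show "snd (fld lam 0 c \<omega> q) - c * fst (fld lam 0 c \<omega> q) \<le> - 0 * (snd q - c * fst q) - -lam*tlo/2"
          unfolding fld_def by (simp add: algebra_simps)
      next
        fix s :: real assume "s \<ge> 0"
        then show "x s \<in> {q. snd q < tlo/2}" using inv[OF h(1,2,3)] sg by fastforce
      qed (use h in auto)
      then show "snd (x \<sigma>) - c * fst (x \<sigma>) + -lam * tlo / 2 * \<sigma> \<le> snd p - c * fst p"
        by (simp add: Ef_def)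
    qed
  qed
  ultimately show "v \<in> UNIV \<times> {min (-(c/lam)*wm) (-(c/lam)*wp) <..< max (-(c/lam)*wm) (-(c/lam)*wp)}"
    unfolding tlo_def thi_def k_def by (cases v) auto
qed

lemma part1_pos:
  fixes lam c wm wp :: real
  assumes lam: "lam > 0" and c: "c \<noteq> 0" and w: "wm < 0" "0 < wp"
  shows "(\<exists>!C. control_set lam 0 c {wm..wp} C) \<and>
     (\<forall>C. control_set lam 0 c {wm..wp} C \<longrightarrow>
        closure C = UNIV \<times> ((\<lambda>w. - (c / lam) * w) ` {wm..wp}) \<and> open C)"
proof -
  define k where "k = -(c/lam)"
  have k0: "k \<noteq> 0" unfolding k_def using lam c by simp
  define C0 :: "(real \<times> real) set" where "C0 = UNIV \<times> {min (k*wm) (k*wp) <..< max (k*wm) (k*wp)}"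
  have tl: "min (k*wm) (k*wp) < 0" "max (k*wm) (k*wp) > 0" using strip_sign[OF k0 w] by auto
  have op: "open C0" unfolding C0_def by (intro open_Times) auto
  have clo: "closure C0 = UNIV \<times> ((\<lambda>w. - (c / lam) * w) ` {wm..wp})"
    unfolding C0_def closure_Times using tl img_strip[OF k0, of wm wp] w unfolding k_def by simp
  have cs: "cs_prop lam 0 c {wm..wp} C0"
    unfolding cs_prop_def
  proof (intro conjI ballI)
    show "C0 \<noteq> {}" unfolding C0_def using tl by auto
    fix v assume v: "v \<in> C0"
    show "C0 \<subseteq> closure (orbit_plus lam 0 c {wm..wp} v)"
    proof
      fix y assume "y \<in> C0"
      then have "reach_c lam 0 c {wm..wp} v y" using p1p_E3[OF lam c w, of v y] v unfolding C0_def k_def by simp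
      then have "y \<in> orbit_plus lam 0 c {wm..wp} v" using reach_orbit[of lam "{wm..wp}"] lam w by auto
      then show "y \<in> closure (orbit_plus lam 0 c {wm..wp} v)" using closure_subset by blast
    qed
    define \<omega> where "\<omega> = snd v / k"
    have o: "\<omega> \<in> {wm<..<wp}" unfolding \<omega>_def using level_inv[OF k0, of "snd v" wm wp] v w unfolding C0_def
      by (auto simp: mem_Times_iff)
    have sv: "snd v = -(c/lam) * \<omega>" unfolding \<omega>_def k_def using k0 unfolding k_def by simp
    have inv: "flw lam 0 c \<omega> \<tau> v \<in> C0" for \<tau>
    proof -
      have "flw lam 0 c \<omega> \<tau> v = (fst v + \<omega>*\<tau>, snd v)"
        using hold_a0[of lam c \<omega> \<tau> "fst v"] lam sv by (cases v) auto
      then show ?thesis using v unfolding C0_def by (auto simp: mem_Times_iff)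
    qed
    show "\<exists>w x. pc_control {wm..wp} w \<and> is_sol lam 0 c w v x \<and> (\<forall>\<tau>\<ge>0. x \<tau> \<in> C0)"
      using pc_const[of \<omega> "{wm..wp}"] const_sol[of lam 0 c \<omega> v] inv o lam by (intro exI conjI) auto
  qed
  have U: "D \<subseteq> C0" if "cs_prop lam 0 c {wm..wp} D" for D
    using p1p_U[OF lam c w that] unfolding C0_def k_def by simp
  from cs_unique[OF cs U] clo op show ?thesis by metis
qed

lemma lin_exp_lim: "m > (0::real) \<Longrightarrow> ((\<lambda>T. (A + B*T) * exp (-m*T)) \<longlongrightarrow> 0) at_top"
  by real_asymp

definition Lf :: "real \<Rightarrow> real \<Rightarrow> real \<Rightarrow> real \<Rightarrow> real" where
  "Lf lam a w u = -(w*lam*u + a*w^2)/lam^2"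

lemma flw_gen:
  assumes "lam \<noteq> 0"
  shows "flw lam a c w \<tau> (s,t) = (s + w*\<tau>, Lf lam a w (c + a*(s + w*\<tau>)) + (t - Lf lam a w (c + a* s)) * exp (lam*\<tau>))"
  unfolding flw_def Ac_def Bc_def Lf_def using assms by (simp add: field_simps power2_eq_square)

lemma flw_zero: "flw lam a c 0 \<tau> (s,t) = (s, t * exp (lam*\<tau>))"
  unfolding flw_def Ac_def Bc_def by simp

lemma Cminus_iff:
  assumes "lam \<noteq> 0"
  shows "(s,t) \<in> Cminus lam a c wm wp \<longleftrightarrow> t < Lf lam a wm (c + a* s) \<and> t < Lf lam a wp (c + a* s)"
proof -
  have l2: "lam^2 > 0" using assms by simp
  have "Fw lam a c w (s,t) < 0 \<longleftrightarrow> t < Lf lam a w (c + a* s)" for w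
  proof -
    have "Fw lam a c w (s,t) = lam^2 * (t - Lf lam a w (c + a* s))"
      unfolding Fw_def Lf_def using assms by (simp add: field_simps power2_eq_square)
    then show ?thesis using l2 by (simp add: mult_less_0_iff)
  qed
  then show ?thesis unfolding Cminus_def by simp
qed

definition Phi :: "real \<Rightarrow> real \<Rightarrow> real \<Rightarrow> real \<Rightarrow> real" where
  "Phi lam a w u = a*w^2/lam^2 * (exp (lam*u/(a*w)) - lam*u/(a*w) - 1)"

lemma phi_va_Phi:
  assumes "a > 0" "w \<noteq> 0"
  shows "snd (phi_va lam a c \<tau> w) = Phi lam a w (a*\<tau>*w)"
  unfolding phi_va_def Phi_def using assms by simp

lemma Phi_nonneg: "a \<ge> 0 \<Longrightarrow> Phi lam a w u \<ge> 0"
proof -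
  assume a: "a \<ge> 0"
  have "exp (lam*u/(a*w)) - lam*u/(a*w) - 1 \<ge> 0" using exp_ge_add_one_self[of "lam*u/(a*w)"] by linarith
  then show ?thesis unfolding Phi_def using a by (intro mult_nonneg_nonneg) auto
qed

lemma Cplus_iff:
  assumes a: "a > 0" and w: "wm < 0" "0 < wp"
  shows "(s,t) \<in> Cplus lam a c wm wp \<longleftrightarrow>
     (c + a* s \<ge> 0 \<and> t > Phi lam a wp (c + a* s)) \<or> (c + a* s \<le> 0 \<and> t > Phi lam a wm (c + a* s))"
proof -
  have e: "(\<exists>\<tau>\<ge>0. s = fst (phi_va lam a c \<tau> w) \<and> t > snd (phi_va lam a c \<tau> w)) \<longleftrightarrow>
           ((c + a* s)/w \<ge> 0 \<and> t > Phi lam a w (c + a* s))" if w0: "w \<noteq> 0" for w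
  proof
    assume "\<exists>\<tau>\<ge>0. s = fst (phi_va lam a c \<tau> w) \<and> t > snd (phi_va lam a c \<tau> w)"
    then obtain \<tau> where t: "\<tau> \<ge> 0" "s = -c/a + \<tau>*w" "t > Phi lam a w (a*\<tau>*w)"
      using phi_va_Phi[OF a w0] unfolding phi_va_def by auto
    have u: "c + a* s = a*\<tau>*w" using t(2) a by (simp add: field_simps)
    show "(c + a* s)/w \<ge> 0 \<and> t > Phi lam a w (c + a* s)" using u t w0 a by simp
  next
    assume h: "(c + a* s)/w \<ge> 0 \<and> t > Phi lam a w (c + a* s)"
    define \<tau> where "\<tau> = (c + a* s)/(a*w)"
    have "\<tau> = ((c + a * s)/w)/a" unfolding \<tau>_def by simp
    then have "\<tau> \<ge> 0" using h a divide_nonneg_pos[of "(c + a * s)/w" a] by simp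
    moreover have "s = fst (phi_va lam a c \<tau> w)" unfolding phi_va_def \<tau>_def using a w0 by (simp add: field_simps)
    moreover have "a*\<tau>*w = c + a* s" unfolding \<tau>_def using a w0 by simp
    ultimately show "\<exists>\<tau>\<ge>0. s = fst (phi_va lam a c \<tau> w) \<and> t > snd (phi_va lam a c \<tau> w)"
      using h phi_va_Phi[OF a w0] by metis
  qed
  have "(c + a* s)/wp \<ge> 0 \<longleftrightarrow> c + a* s \<ge> 0" using w by (simp add: zero_le_divide_iff)
  moreover have "(c + a* s)/wm \<ge> 0 \<longleftrightarrow> c + a* s \<le> 0" using w by (simp add: zero_le_divide_iff)
  ultimately show ?thesis unfolding Cplus_def using e[of wp] e[of wm] w by auto
qed

lemma Lf_zero[simp]: "Lf lam a 0 u = 0" unfolding Lf_def by simp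

lemma Lf_not_both_pos:
  assumes a: "a > 0" and w: "wm < 0" "0 < wp" and lam: "lam \<noteq> 0"
  shows "\<not> (Lf lam a wm u > 0 \<and> Lf lam a wp u > 0)"
proof
  assume h: "Lf lam a wm u > 0 \<and> Lf lam a wp u > 0"
  have l2: "lam^2 > 0" using lam by simp
  have "wm*lam*u + a*wm^2 < 0" "wp*lam*u + a*wp^2 < 0" using h l2 unfolding Lf_def
    by (auto simp: divide_less_0_iff neg_divide_less_eq zero_less_divide_iff)
  then have "wm*(lam*u + a*wm) < 0" "wp*(lam*u + a*wp) < 0" by (auto simp: algebra_simps power2_eq_square)
  then have "lam*u + a*wm > 0" "lam*u + a*wp < 0" using w by (auto simp: mult_less_0_iff)
  then have "a*wm > a*wp" by linarith
  then show False using a w by (simp add: mult_less_cancel_left)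
qed

definition C2set :: "real \<Rightarrow> real \<Rightarrow> real \<Rightarrow> real \<Rightarrow> real \<Rightarrow> (real \<times> real) set" where
  "C2set lam a c wm wp = UNIV - (Cplus lam a c wm wp \<union> Cminus lam a c wm wp)"

lemma p2_inv:
  assumes a: "a > 0" and lam: "lam < 0" and w: "wm < 0" "0 < wp"
    and v: "v \<in> C2set lam a c wm wp" and t: "\<tau> \<ge> 0"
  shows "flw lam a c 0 \<tau> v \<in> C2set lam a c wm wp"
proof -
  obtain s t0 where sv: "v = (s,t0)" by (cases v)
  define u where "u = c + a * s"
  define t' where "t' = t0 * exp (lam*\<tau>)"
  have e: "0 < exp (lam*\<tau>)" "exp (lam*\<tau>) \<le> 1" using lam t by (auto simp: mult_nonpos_nonneg)
  have P: "Phi lam a w u \<ge> 0" for w using Phi_nonneg a by auto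
  have nb: "\<not> (Lf lam a wm u > 0 \<and> Lf lam a wp u > 0)" using Lf_not_both_pos[OF a w] lam by simp
  have v1: "\<not> ((u \<ge> 0 \<and> t0 > Phi lam a wp u) \<or> (u \<le> 0 \<and> t0 > Phi lam a wm u))"
    using v Cplus_iff[OF a w, of s t0] unfolding C2set_def sv u_def by auto
  have v2: "\<not> (t0 < Lf lam a wm u \<and> t0 < Lf lam a wp u)"
    using v Cminus_iff[OF lam[THEN less_imp_neq], of s t0] unfolding C2set_def sv u_def by auto
  have "\<not> ((u \<ge> 0 \<and> t' > Phi lam a wp u) \<or> (u \<le> 0 \<and> t' > Phi lam a wm u)) \<and>
        \<not> (t' < Lf lam a wm u \<and> t' < Lf lam a wp u)"
  proof (cases "t0 \<ge> 0")
    case True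
    then have "0 \<le> t'" "t' \<le> t0" unfolding t'_def using e by (auto simp: mult_left_le)
    then show ?thesis using v1 nb by auto
  next
    case False
    then have "t' \<le> 0" "t0 \<le> t'" unfolding t'_def using e
      by (auto simp: mult_nonpos_nonneg mult_le_cancel_left1)
    then show ?thesis using v2 P by (meson le_less_trans less_le_trans not_le)
  qed
  then show ?thesis unfolding C2set_def sv flw_zero t'_def[symmetric]
    using Cplus_iff[OF a w, of s t'] Cminus_iff[OF lam[THEN less_imp_neq], of s t'] unfolding u_def by auto
qed

lemma Phi_cont: "continuous_on UNIV (\<lambda>q::real\<times>real. Phi lam a w (c + a * fst q))"
  unfolding Phi_def divide_inverse by (intro continuous_intros)

lemma Lf_cont: "continuous_on UNIV (\<lambda>q::real\<times>real. Lf lam a w (c + a * fst q))"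
  unfolding Lf_def divide_inverse by (intro continuous_intros)

lemma Phi_0[simp]: "Phi lam a w 0 = 0" unfolding Phi_def by simp

lemma p2_closed:
  assumes a: "a > 0" and lam: "lam < 0" and w: "wm < 0" "0 < wp"
  shows "closed (C2set lam a c wm wp)"
proof -
  have cm: "Cminus lam a c wm wp = {q. snd q < Lf lam a wm (c + a * fst q)} \<inter> {q. snd q < Lf lam a wp (c + a * fst q)}"
    using Cminus_iff[OF lam[THEN less_imp_neq]] by auto
  have om: "open (Cminus lam a c wm wp)" unfolding cm
    by (intro open_Int open_Collect_less Lf_cont continuous_intros)
  have cp: "Cplus lam a c wm wp = {q. 0 < c + a * fst q \<and> Phi lam a wp (c + a * fst q) < snd q}
     \<union> {q. c + a * fst q < 0 \<and> Phi lam a wm (c + a * fst q) < snd q}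
     \<union> ({q. Phi lam a wp (c + a * fst q) < snd q} \<inter> {q. Phi lam a wm (c + a * fst q) < snd q})"
  proof (intro set_eqI iffI)
    fix q assume "q \<in> Cplus lam a c wm wp"
    then show "q \<in> {q. 0 < c + a * fst q \<and> Phi lam a wp (c + a * fst q) < snd q}
     \<union> {q. c + a * fst q < 0 \<and> Phi lam a wm (c + a * fst q) < snd q}
     \<union> ({q. Phi lam a wp (c + a * fst q) < snd q} \<inter> {q. Phi lam a wm (c + a * fst q) < snd q})"
      using Cplus_iff[OF a w, of "fst q" "snd q"] by (cases "c + a * fst q = 0") auto
  next
    fix q assume "q \<in> {q. 0 < c + a * fst q \<and> Phi lam a wp (c + a * fst q) < snd q}
     \<union> {q. c + a * fst q < 0 \<and> Phi lam a wm (c + a * fst q) < snd q}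
     \<union> ({q. Phi lam a wp (c + a * fst q) < snd q} \<inter> {q. Phi lam a wm (c + a * fst q) < snd q})"
    then show "q \<in> Cplus lam a c wm wp"
      using Cplus_iff[OF a w, of "fst q" "snd q"] by (cases "c + a * fst q \<ge> 0") auto
  qed
  have op: "open (Cplus lam a c wm wp)" unfolding cp
    by (intro open_Un open_Int open_Collect_conj open_Collect_less Phi_cont continuous_intros)
  show ?thesis unfolding C2set_def using om op by (intro closed_Diff) auto
qed

lemma p2_line_a:
  assumes lam: "lam < 0" and z: "0 \<in> Om"
  shows "(fst v, 0) \<in> Rc lam a c Om v"
proof (rule Rc_approx)
  fix e :: real assume e: "e > 0"
  obtain s0 t0 where v: "v = (s0,t0)" by (cases v)
  define K where "K = \<bar>t0\<bar> + 1"
  have K: "K > 0" unfolding K_def by simp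
  define T where "T = \<bar>ln (e/(2*K))\<bar> / (-lam)"
  have T: "T \<ge> 0" "exp (lam*T) \<le> e/(2*K)" using exp_small[OF e K lam] unfolding T_def by auto
  have r: "reach_c lam a c Om v (flw lam a c 0 T v)" using z T by (intro rc_step rc_refl) auto
  have "dist (flw lam a c 0 T v) (fst v, 0) = \<bar>t0\<bar> * exp (lam*T)"
    unfolding v flw_zero by (simp add: dist_same_fst abs_mult)
  also have "\<dots> \<le> K * (e/(2*K))" using T(2) unfolding K_def by (intro mult_mono) auto
  also have "\<dots> < e" using K e by simp
  finally show "\<exists>z\<in>Rc lam a c Om v. dist z (fst v, 0) < e" using Rc_reach[OF r] by blast
qed

lemma Lf_bound:
  assumes "\<bar>\<omega>\<bar> \<le> \<eta>" "\<eta> \<le> 1" "a \<ge> 0" "lam \<noteq> 0"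
  shows "\<bar>Lf lam a \<omega> u\<bar> \<le> \<eta> * (\<bar>lam\<bar> * \<bar>u\<bar> + a) / lam^2"
proof -
  have l2: "lam^2 > 0" using assms by simp
  have "\<bar>\<omega>*lam*u + a*\<omega>^2\<bar> \<le> \<bar>\<omega>\<bar>*\<bar>lam\<bar>*\<bar>u\<bar> + a*\<omega>^2"
    using assms by (simp add: abs_mult abs_triangle_ineq[THEN order_trans])
  also have "\<dots> \<le> \<eta>*\<bar>lam\<bar>*\<bar>u\<bar> + a*\<eta>"
  proof -
    have e1: "\<omega>^2 = \<bar>\<omega>\<bar>*\<bar>\<omega>\<bar>" by (simp add: power2_eq_square)
    have "\<bar>\<omega>\<bar>*\<bar>\<omega>\<bar> \<le> \<eta>*1" using assms by (intro mult_mono) auto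
    then have "\<omega>^2 \<le> \<eta>" using e1 by simp
    then have "a*\<omega>^2 \<le> a*\<eta>" using assms by (simp add: mult_left_mono)
    moreover have "\<bar>\<omega>\<bar>*\<bar>lam\<bar>*\<bar>u\<bar> \<le> \<eta>*\<bar>lam\<bar>*\<bar>u\<bar>" using assms by (intro mult_right_mono) auto
    ultimately show ?thesis by simp
  qed
  finally have "\<bar>\<omega>*lam*u + a*\<omega>^2\<bar> \<le> \<eta> * (\<bar>lam\<bar> * \<bar>u\<bar> + a)" by (simp add: algebra_simps)
  then show ?thesis unfolding Lf_def using l2 by (simp add: abs_div divide_right_mono)
qed

lemma p2_line_b:
  assumes a: "a > 0" and lam: "lam < 0" and w: "wm < 0" "0 < wp"
  shows "(s1, 0) \<in> Rc lam a c {wm..wp} (s0, 0)"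
proof (rule Rc_approx)
  fix e :: real assume e: "e > 0"
  define u0 where "u0 = c + a * s0"
  define u1 where "u1 = c + a * s1"
  define X1 where "X1 = (\<bar>lam\<bar> * \<bar>u1\<bar> + a) / lam^2"
  define X0 where "X0 = (\<bar>lam\<bar> * \<bar>u0\<bar> + a) / lam^2"
  define M where "M = X1 + X0 + 1"
  have "X1 \<ge> 0" "X0 \<ge> 0" unfolding X1_def X0_def
    using a by (intro divide_nonneg_nonneg; simp)+
  then have M: "M > 0" unfolding M_def by linarith
  define \<eta> where "\<eta> = min (min 1 (min wp (-wm))) (e/(2*M))"
  have \<eta>: "\<eta> > 0" "\<eta> \<le> 1" "\<eta> \<le> wp" "\<eta> \<le> -wm" "\<eta> \<le> e/(2*M)" unfolding \<eta>_def using w e M by auto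
  define \<omega> where "\<omega> = (if s1 \<ge> s0 then \<eta> else -\<eta>)"
  define \<tau> where "\<tau> = (s1 - s0)/\<omega>"
  have o: "\<omega> \<in> {wm..wp}" "\<bar>\<omega>\<bar> \<le> \<eta>" "\<omega> \<noteq> 0" "\<tau> \<ge> 0" unfolding \<omega>_def \<tau>_def using \<eta>
    by (auto simp: divide_nonpos_neg divide_nonpos_pos)
  define z where "z = flw lam a c \<omega> \<tau> (s0, 0)"
  have r: "reach_c lam a c {wm..wp} (s0,0) z" unfolding z_def using o(1,4) by (intro rc_step rc_refl) auto
  have st: "s0 + \<omega>*\<tau> = s1" unfolding \<tau>_def using o(3) by simp
  have zz: "z = (s1, Lf lam a \<omega> u1 + (0 - Lf lam a \<omega> u0) * exp (lam*\<tau>))"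
    unfolding z_def flw_gen[OF lam[THEN less_imp_neq]] st u0_def u1_def by simp
  have ex: "0 < exp (lam*\<tau>)" "exp (lam*\<tau>) \<le> 1" using lam o(4) by (auto simp: mult_nonpos_nonneg)
  have b1: "\<bar>Lf lam a \<omega> u1\<bar> \<le> \<eta> * X1"
    using Lf_bound[OF o(2) \<eta>(2) less_imp_le[OF a] less_imp_neq[OF lam]] unfolding X1_def by simp
  have b0: "\<bar>Lf lam a \<omega> u0\<bar> \<le> \<eta> * X0"
    using Lf_bound[OF o(2) \<eta>(2) less_imp_le[OF a] less_imp_neq[OF lam]] unfolding X0_def by simp
  have "\<bar>(0 - Lf lam a \<omega> u0) * exp (lam*\<tau>)\<bar> \<le> \<bar>Lf lam a \<omega> u0\<bar>"
    using ex by (simp add: abs_mult mult_left_le)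
  then have d1: "dist z (s1, 0) \<le> \<eta> * X1 + \<eta> * X0"
    unfolding zz dist_same_fst using b0 b1 by linarith
  have d2: "\<eta> * M = \<eta> * X1 + \<eta> * X0 + \<eta>" unfolding M_def by (simp add: distrib_left)
  have d3: "\<eta> * M \<le> e/(2*M) * M" using \<eta>(5) M by (intro mult_right_mono) auto
  have d4: "e/(2*M) * M = e/2" using M by simp
  have "dist z (s1, 0) < e" using d1 d2 d3 d4 \<eta>(1) e by argo
  then show "\<exists>z\<in>Rc lam a c {wm..wp} (s0,0). dist z (s1, 0) < e" by (rule bexI[OF _ Rc_reach[OF r]])
qed

lemma p2_line:
  assumes a: "a > 0" and lam: "lam < 0" and w: "wm < 0" "0 < wp"
  shows "(s1, 0) \<in> Rc lam a c {wm..wp} v"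
proof -
  have 1: "(fst v, 0) \<in> Rc lam a c {wm..wp} v" by (rule p2_line_a[OF lam]) (use w in auto)
  have 2: "(s1, 0) \<in> Rc lam a c {wm..wp} (fst v, 0)" by (rule p2_line_b[OF a lam w])
  show ?thesis by (rule Rc_trans[OF 1 2])
qed

lemma p2_C1:
  assumes a: "a > 0" and lam: "lam < 0" and w: "wm < 0" "0 < wp" and ww: "w \<in> {wm, wp}"
    and t: "\<tau>1 \<ge> 0" "0 \<le> t1" "t1 \<le> snd (phi_va lam a c \<tau>1 w)"
  shows "(fst (phi_va lam a c \<tau>1 w), t1) \<in> Rc lam a c {wm..wp} v"
proof -
  have lam0: "lam \<noteq> 0" using lam by simp
  define g where "g \<sigma> = Lf lam a w (a*w*\<tau>1) - Lf lam a w (a*\<sigma>*w) * exp (lam*(\<tau>1 - \<sigma>))" for \<sigma>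
  have fl: "flw lam a c w (\<tau>1 - \<sigma>) (-c/a + \<sigma>*w, 0) = (fst (phi_va lam a c \<tau>1 w), g \<sigma>)" for \<sigma>
  proof -
    have e1: "c + a*(-c/a + \<sigma>*w + w*(\<tau>1 - \<sigma>)) = a*w*\<tau>1" using a by (simp add: field_simps)
    have e2: "c + a*(-c/a + \<sigma>*w) = a*\<sigma>*w" using a by (simp add: field_simps)
    show ?thesis unfolding flw_gen[OF lam0] e1 e2 g_def phi_va_def by (simp add: algebra_simps)
  qed
  have gc: "continuous_on {0..\<tau>1} g" unfolding g_def Lf_def divide_inverse by (intro continuous_intros)
  have g1: "g \<tau>1 = 0" unfolding g_def by (simp add: mult_ac)
  have g0: "g 0 = snd (phi_va lam a c \<tau>1 w)" unfolding g_def Lf_def phi_va_def using lam0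
    by (simp add: field_simps power2_eq_square)
  obtain \<sigma> where s: "0 \<le> \<sigma>" "\<sigma> \<le> \<tau>1" "g \<sigma> = t1"
    using IVT2'[where f=g and a=0 and b=\<tau>1 and y=t1, OF _ _ t(1) gc] g1 g0 t by auto
  have wO: "w \<in> {wm..wp}" using ww w by auto
  have p: "(-c/a + \<sigma>*w, 0) \<in> Rc lam a c {wm..wp} v" by (rule p2_line[OF a lam w])
  have "reach_c lam a c {wm..wp} (-c/a + \<sigma>*w, 0) (flw lam a c w (\<tau>1 - \<sigma>) (-c/a + \<sigma>*w, 0))"
    using wO s by (intro rc_step rc_refl) auto
  then have "(fst (phi_va lam a c \<tau>1 w), t1) \<in> Rc lam a c {wm..wp} (-c/a + \<sigma>*w, 0)"
    using Rc_reach fl s(3) by metis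
  then show ?thesis by (rule Rc_trans[OF p])
qed

lemma p2_C2:
  assumes a: "a > 0" and lam: "lam < 0" and w: "wm < 0" "0 < wp" and o1: "\<omega>1 \<in> {wm..wp}"
    and t1: "t1 = Lf lam a \<omega>1 (c + a * s1)"
  shows "(s1, t1) \<in> Rc lam a c {wm..wp} v"
proof (cases "\<omega>1 = 0")
  case True
  then show ?thesis using t1 p2_line[OF a lam w] by simp
next
  case False
  have lam0: "lam \<noteq> 0" using lam by simp
  define \<alpha> where "\<alpha> = Lf lam a \<omega>1 (c + a * s1)"
  define \<beta> where "\<beta> = a*\<omega>1^2/lam"
  have lim: "((\<lambda>T. (\<alpha> + \<beta>*T) * exp (-(-lam)*T)) \<longlongrightarrow> 0) at_top"
    by (rule lin_exp_lim) (use lam in simp)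
  show ?thesis
  proof (rule Rc_approx)
    fix e :: real assume e: "e > 0"
    have "\<forall>\<^sub>F T in at_top. dist ((\<alpha> + \<beta>*T) * exp (-(-lam)*T)) 0 < e"
      using lim[unfolded tendsto_iff] e by blast
    then obtain N where N: "\<forall>T\<ge>N. dist ((\<alpha> + \<beta>*T) * exp (-(-lam)*T)) 0 < e"
      unfolding eventually_at_top_linorder by blast
    define T where "T = max N 0"
    have T: "T \<ge> 0" "\<bar>(\<alpha> + \<beta>*T) * exp (lam*T)\<bar> < e" using N unfolding T_def by (auto simp: dist_real_def)
    define p where "p = (s1 - \<omega>1*T, (0::real))"
    have pR: "p \<in> Rc lam a c {wm..wp} v" unfolding p_def by (rule p2_line[OF a lam w])
    define z where "z = flw lam a c \<omega>1 T p"
    have r: "reach_c lam a c {wm..wp} p z" unfolding z_def using o1 T by (intro rc_step rc_refl) auto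
    have Le: "Lf lam a \<omega>1 (c + a * (s1 - \<omega>1*T)) = \<alpha> + \<beta>*T"
      unfolding \<alpha>_def \<beta>_def Lf_def using lam0 by (simp add: field_simps power2_eq_square)
    have zz: "z = (s1, t1 - (\<alpha> + \<beta>*T) * exp (lam*T))"
      unfolding z_def p_def flw_gen[OF lam0] Le using t1 unfolding \<alpha>_def by (simp add: algebra_simps)
    have "dist z (s1, t1) < e" unfolding zz dist_same_fst using T(2) by simp
    then show "\<exists>z\<in>Rc lam a c {wm..wp} v. dist z (s1, t1) < e"
      using Rc_trans[OF pR Rc_reach[OF r]] by blast
  qed
qed

lemma p2_E3:
  assumes a: "a > 0" and lam: "lam < 0" and w: "wm < 0" "0 < wp" and y: "y \<in> C2set lam a c wm wp"
  shows "y \<in> Rc lam a c {wm..wp} v"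
proof -
  have lam0: "lam \<noteq> 0" using lam by simp
  obtain s1 t1 where y1: "y = (s1, t1)" by (cases y)
  define u1 where "u1 = c + a * s1"
  have np: "\<not> ((u1 \<ge> 0 \<and> t1 > Phi lam a wp u1) \<or> (u1 \<le> 0 \<and> t1 > Phi lam a wm u1))"
    using y Cplus_iff[OF a w, of s1 t1] unfolding C2set_def y1 u1_def by auto
  have nm: "\<not> (t1 < Lf lam a wm u1 \<and> t1 < Lf lam a wp u1)"
    using y Cminus_iff[OF lam0, of s1 t1] unfolding C2set_def y1 u1_def by auto
  show ?thesis
  proof (cases "t1 \<ge> 0")
    case True
    have C1: "(s1, t1) \<in> Rc lam a c {wm..wp} v" if wv: "w \<in> {wm, wp}" and h: "u1/w \<ge> 0" "t1 \<le> Phi lam a w u1" for w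
    proof -
      have w0: "w \<noteq> 0" using wv w by auto
      define \<tau>1 where "\<tau>1 = (u1/w)/a"
      have t0: "\<tau>1 \<ge> 0" unfolding \<tau>1_def by (rule divide_nonneg_pos[OF h(1) a])
      have f: "fst (phi_va lam a c \<tau>1 w) = s1" unfolding phi_va_def \<tau>1_def u1_def using a w0 by (simp add: field_simps)
      have sn: "snd (phi_va lam a c \<tau>1 w) = Phi lam a w u1" unfolding phi_va_Phi[OF a w0] \<tau>1_def using a w0 by simp
      show ?thesis using p2_C1[OF a lam w wv t0 True, where v=v and c=c] f sn h by simp
    qed
    show ?thesis
    proof (cases "u1 \<ge> 0")
      case True
      then show ?thesis using C1[of wp] np w y1 by (simp add: not_less)
    next
      case False
      then show ?thesis using C1[of wm] np w y1 by (simp add: not_less divide_nonpos_neg)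
    qed
  next
    case False
    have fc: "continuous_on S (\<lambda>\<omega>. Lf lam a \<omega> u1)" for S unfolding Lf_def divide_inverse by (intro continuous_intros)
    obtain \<omega>1 where o1: "\<omega>1 \<in> {wm..wp}" "Lf lam a \<omega>1 u1 = t1"
    proof (cases "t1 \<ge> Lf lam a wm u1")
      case True
      obtain \<omega>1 where "wm \<le> \<omega>1" "\<omega>1 \<le> 0" "Lf lam a \<omega>1 u1 = t1"
        using IVT'[where f="\<lambda>\<omega>. Lf lam a \<omega> u1" and a=wm and b=0 and y=t1, OF True _ _ fc] False w by auto
      then show ?thesis using that[of \<omega>1] w by auto
    next
      case f2: False
      then have "t1 \<ge> Lf lam a wp u1" using nm by auto
      then obtain \<omega>1 where "0 \<le> \<omega>1" "\<omega>1 \<le> wp" "Lf lam a \<omega>1 u1 = t1"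
        using IVT2'[where f="\<lambda>\<omega>. Lf lam a \<omega> u1" and a=0 and b=wp and y=t1, OF _ _ _ fc] False w by auto
      then show ?thesis using that[of \<omega>1] w by auto
    qed
    have "(s1, Lf lam a \<omega>1 (c + a * s1)) \<in> Rc lam a c {wm..wp} v" by (rule p2_C2[OF a lam w o1(1)]) simp
    then show ?thesis using o1(2) y1 unfolding u1_def by simp
  qed
qed

lemma decay_contra_gen:
  fixes W :: "real \<times> real \<Rightarrow> real"
  assumes cs: "cs_prop lam a c Om D" and v: "v \<in> D" and k: "k > 0"
    and Wc: "continuous_on UNIV W" and Wv: "W v > 0"
    and gl: "\<And>w x p s. pc_control Om w \<Longrightarrow> is_sol lam a c w p x \<Longrightarrow> s \<ge> 0 \<Longrightarrow> exp (k * s) * W (x s) \<le> W p"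
  shows False
proof (rule cs_contra[OF cs v Wc])
  fix w x assume wx: "pc_control Om w" "is_sol lam a c w v x"
  let ?\<theta> = "max (exp (-k) * W v) 0"
  have y: "W (x 1) \<le> exp (-k) * W v"
    using gl[OF wx, of 1] by (simp add: exp_minus field_simps)
  have th: "?\<theta> < W v" using Wv k by (auto simp: mult_less_cancel_right1)
  have "\<forall>z\<in>orbit_plus lam a c Om (x 1). W z \<le> ?\<theta>"
  proof
    fix z assume "z \<in> orbit_plus lam a c Om (x 1)"
    then obtain w' x' \<tau>' where z: "pc_control Om w'" "is_sol lam a c w' (x 1) x'" "\<tau>' \<ge> 0" "x' \<tau>' = z"
      unfolding orbit_plus_def by blast
    have "exp (k * \<tau>') * W z \<le> W (x 1)" using gl[OF z(1,2,3)] z(4) by simp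
    moreover have "exp (k * \<tau>') \<ge> 1" using k z(3) by simp
    ultimately have "W z \<le> max (W (x 1)) 0"
      by (smt (verit, ccfv_threshold) mult_le_cancel_right1)
    then show "W z \<le> ?\<theta>" using y by auto
  qed
  then show "\<exists>\<tau>\<ge>0. \<exists>\<theta><W v. \<forall>z\<in>orbit_plus lam a c Om (x \<tau>). W z \<le> \<theta>"
    using th by (intro exI[of _ "1::real"] conjI exI[of _ ?\<theta>]) auto
qed

lemma glob_lyap_min:
  fixes V1 V2 :: "real \<times> real \<Rightarrow> real"
  assumes pc: "pc_control Om w" and sol: "is_sol lam a c w p x"
    and V1d: "\<And>q. (V1 has_derivative DV1 q) (at q)" and U1: "open U1"
    and c1: "\<And>q \<omega>. q \<in> U1 \<Longrightarrow> \<omega> \<in> Om \<Longrightarrow> DV1 q (fld lam a c \<omega> q) \<le> -k * V1 q - 0"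
    and V2d: "\<And>q. (V2 has_derivative DV2 q) (at q)" and U2: "open U2"
    and c2: "\<And>q \<omega>. q \<in> U2 \<Longrightarrow> \<omega> \<in> Om \<Longrightarrow> DV2 q (fld lam a c \<omega> q) \<le> -k * V2 q - 0"
    and a1: "\<And>q. V1 q \<le> V2 q \<Longrightarrow> q \<in> U1" and a2: "\<And>q. V2 q \<le> V1 q \<Longrightarrow> q \<in> U2"
    and s: "s \<ge> 0"
  shows "exp (k * s) * min (V1 (x s)) (V2 (x s)) \<le> min (V1 p) (V2 p)"
proof -
  let ?h = "\<lambda>r. exp (k * r) * min (V1 (x r)) (V2 (x r))"
  have "?h s \<le> ?h 0"
  proof (rule loc_glob[where h = ?h])
    have xc: "continuous_on {0..s} x" using continuous_on_subset[OF sol_cont[OF sol]] by auto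
    have c1': "continuous_on UNIV V1" using V_cont[OF V1d] .
    have c2': "continuous_on UNIV V2" using V_cont[OF V2d] .
    show "continuous_on {0..s} ?h"
      using xc by (intro continuous_intros continuous_on_compose2[OF c1'] continuous_on_compose2[OF c2']) auto
    show "0 \<le> s" by (rule s)
    fix \<tau> assume t: "\<tau> \<in> {0..<s}"
    show "\<exists>\<delta>>0. \<forall>\<sigma>. \<tau> \<le> \<sigma> \<and> \<sigma> \<le> \<tau> + \<delta> \<longrightarrow> ?h \<sigma> \<le> ?h \<tau>"
    proof (cases "V1 (x \<tau>) \<le> V2 (x \<tau>)")
      case True
      obtain \<delta> where d: "\<delta> > 0" "\<forall>\<sigma>. \<tau> \<le> \<sigma> \<and> \<sigma> \<le> \<tau>+\<delta> \<longrightarrow>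
          exp (k*\<sigma>) * V1 (x \<sigma>) + 0 * Ef k \<sigma> \<le> exp (k*\<tau>) * V1 (x \<tau>) + 0 * Ef k \<tau>"
        using loc_lyap[OF pc sol V1d U1 c1 _ a1[OF True]] t by auto
      show ?thesis
      proof (intro exI[of _ \<delta>] conjI d(1) allI impI)
        fix \<sigma> assume "\<tau> \<le> \<sigma> \<and> \<sigma> \<le> \<tau> + \<delta>"
        then have "exp (k*\<sigma>) * V1 (x \<sigma>) \<le> exp (k*\<tau>) * V1 (x \<tau>)" using d by auto
        moreover have "?h \<sigma> \<le> exp (k*\<sigma>) * V1 (x \<sigma>)" by (intro mult_left_mono) auto
        moreover have "?h \<tau> = exp (k*\<tau>) * V1 (x \<tau>)" using True by simp
        ultimately show "?h \<sigma> \<le> ?h \<tau>" by linarith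
      qed
    next
      case False
      then have F: "V2 (x \<tau>) \<le> V1 (x \<tau>)" by simp
      obtain \<delta> where d: "\<delta> > 0" "\<forall>\<sigma>. \<tau> \<le> \<sigma> \<and> \<sigma> \<le> \<tau>+\<delta> \<longrightarrow>
          exp (k*\<sigma>) * V2 (x \<sigma>) + 0 * Ef k \<sigma> \<le> exp (k*\<tau>) * V2 (x \<tau>) + 0 * Ef k \<tau>"
        using loc_lyap[OF pc sol V2d U2 c2 _ a2[OF F]] t by auto
      show ?thesis
      proof (intro exI[of _ \<delta>] conjI d(1) allI impI)
        fix \<sigma> assume "\<tau> \<le> \<sigma> \<and> \<sigma> \<le> \<tau> + \<delta>"
        then have "exp (k*\<sigma>) * V2 (x \<sigma>) \<le> exp (k*\<tau>) * V2 (x \<tau>)" using d by auto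
        moreover have "?h \<sigma> \<le> exp (k*\<sigma>) * V2 (x \<sigma>)" by (intro mult_left_mono) auto
        moreover have "?h \<tau> = exp (k*\<tau>) * V2 (x \<tau>)" using F by simp
        ultimately show "?h \<sigma> \<le> ?h \<tau>" by linarith
      qed
    qed
  qed
  then show ?thesis using sol unfolding is_sol_def by simp
qed

definition dPhi :: "real \<Rightarrow> real \<Rightarrow> real \<Rightarrow> real \<Rightarrow> real" where
  "dPhi lam a w u = (w/lam) * (exp (lam*u/(a*w)) - 1)"

lemma Vplus_deriv:
  assumes "a \<noteq> 0" "w \<noteq> 0" "lam \<noteq> 0"
  shows "((\<lambda>q. snd q - Phi lam a w (c + a * fst q)) has_derivative
          (\<lambda>h. snd h - dPhi lam a w (c + a * fst q) * (a * fst h))) (at q)"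
proof -
  have d: "(Phi lam a w has_real_derivative dPhi lam a w u) (at u)" for u
    unfolding Phi_def dPhi_def using assms by (auto intro!: derivative_eq_intros simp: field_simps power2_eq_square)
  have "((\<lambda>q. Phi lam a w (c + a * fst q)) has_derivative (\<lambda>h. dPhi lam a w (c + a * fst q) * (a * fst h))) (at q)"
  proof -
    have g: "((\<lambda>q. c + a * fst q) has_derivative (\<lambda>h. a * fst h)) (at q)"
      by (auto intro!: derivative_eq_intros)
    show ?thesis
      using DERIV_compose_FDERIV[where f="Phi lam a w" and g="\<lambda>q. c + a * fst q" and x=q and s=UNIV,
          OF d[of "c + a * fst q"] g]
      by (simp add: mult.commute)
  qed
  then show ?thesis by (auto intro!: derivative_eq_intros)
qed

lemma Vplus_cond:
  assumes a: "a > 0" and lam: "lam < 0" and w0: "w \<noteq> 0" and ww: "w * (w - \<omega>) \<ge> 0"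
  shows "snd (fld lam a c \<omega> q) - dPhi lam a w (c + a * fst q) * (a * fst (fld lam a c \<omega> q))
     \<le> - (-lam) * (snd q - Phi lam a w (c + a * fst q))"
proof -
  define u where "u = c + a * fst q"
  define x where "x = lam*u/(a*w)"
  define E where "E = exp x"
  have ux: "u = (a*w/lam)*x" unfolding x_def using a w0 lam by (simp add: field_simps)
  have lhs: "snd (fld lam a c \<omega> q) - dPhi lam a w u * (a * fst (fld lam a c \<omega> q)) - (- (-lam) * (snd q - Phi lam a w u))
     = (a*w/lam)*(w - \<omega>)*(E - x - 1)"
    unfolding fld_def dPhi_def Phi_def E_def x_def[symmetric] u_def[symmetric] ux
    using a w0 lam by (simp add: field_simps power2_eq_square)
  have Q: "E - x - 1 \<ge> 0" unfolding E_def using exp_ge_add_one_self[of x] by linarith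
  have P: "(a*w/lam)*(w - \<omega>) \<le> 0"
  proof -
    have "(a*w/lam)*(w - \<omega>) = a * (w*(w - \<omega>)) / lam" by simp
    moreover have "a * (w*(w - \<omega>)) \<ge> 0" using a ww by simp
    ultimately show ?thesis using lam by (simp add: divide_nonneg_neg)
  qed
  have "(a*w/lam)*(w - \<omega>)*(E - x - 1) \<le> 0" using mult_nonpos_nonneg[OF P Q] .
  then show ?thesis using lhs unfolding u_def by linarith
qed

lemma p2_U_plus:
  assumes a: "a > 0" and lam: "lam < 0" and w: "wm < 0" "0 < wp"
    and cs: "cs_prop lam a c {wm..wp} D" and v: "v \<in> D"
  shows "v \<notin> Cplus lam a c wm wp"
proof
  assume vp: "v \<in> Cplus lam a c wm wp"
  have contra: False if wv: "w \<in> {wm,wp}" and pos: "snd v - Phi lam a w (c + a * fst v) > 0" for w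
  proof (rule decay_contra[OF cs v, of "-lam" "\<lambda>q. snd q - Phi lam a w (c + a * fst q)"])
    have w0: "w \<noteq> 0" using wv w by auto
    show "0 < -lam" using lam by simp
    show "((\<lambda>q. snd q - Phi lam a w (c + a * fst q)) has_derivative
          (\<lambda>h. snd h - dPhi lam a w (c + a * fst q) * (a * fst h))) (at q)" for q
      by (rule Vplus_deriv) (use a w0 lam in auto)
    show "snd v - Phi lam a w (c + a * fst v) > 0" by (rule pos)
    fix q \<omega> assume o: "\<omega> \<in> {wm..wp}"
    have "w * (w - \<omega>) \<ge> 0" using wv o w by (auto simp: mult_nonpos_nonpos)
    then show "snd (fld lam a c \<omega> q) - dPhi lam a w (c + a * fst q) * (a * fst (fld lam a c \<omega> q))
     \<le> - (-lam) * (snd q - Phi lam a w (c + a * fst q))"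
      by (rule Vplus_cond[OF a lam w0])
  qed
  obtain s t where st: "v = (s,t)" by (cases v)
  have "(c + a* s \<ge> 0 \<and> t > Phi lam a wp (c + a* s)) \<or> (c + a* s \<le> 0 \<and> t > Phi lam a wm (c + a* s))"
    using vp Cplus_iff[OF a w, of s t] st by simp
  then show False using contra[of wp] contra[of wm] st by auto
qed

lemma Vm_deriv:
  "((\<lambda>q. Lf lam a w (c + a * fst q) - snd q) has_derivative (\<lambda>h. -(w/lam) * (a * fst h) - snd h)) (at q)"
proof -
  have "((\<lambda>q. -(w*lam*(c + a * fst q) + a*w^2)/lam^2 - snd q) has_derivative
     (\<lambda>h. -(w*lam*(a * fst h))/lam^2 - snd h)) (at q)"
    by (auto intro!: derivative_eq_intros simp: divide_inverse)
  moreover have "(\<lambda>h::real\<times>real. -(w*lam*(a * fst h))/lam^2 - snd h) = (\<lambda>h. -(w/lam) * (a * fst h) - snd h)"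
    by (auto simp: power2_eq_square)
  ultimately show ?thesis unfolding Lf_def by simp
qed

lemma Vm_cond:
  assumes lam: "lam < 0" and h: "(\<omega> - w0) * (lam * (c + a * fst q) + a * w0) \<le> 0"
  shows "-(w0/lam) * (a * fst (fld lam a c \<omega> q)) - snd (fld lam a c \<omega> q)
     \<le> - (-lam) * (Lf lam a w0 (c + a * fst q) - snd q) - 0"
proof -
  define u where "u = c + a * fst q"
  have e: "-(w0/lam) * (a * fst (fld lam a c \<omega> q)) - snd (fld lam a c \<omega> q)
     - (- (-lam) * (Lf lam a w0 (c + a * fst q) - snd q) - 0) = -((\<omega> - w0) * (lam * u + a * w0)) / lam"
    unfolding fld_def Lf_def u_def using lam by (simp add: field_simps power2_eq_square)
  have "-((\<omega> - w0) * (lam * u + a * w0)) / lam \<le> 0"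
    using divide_nonpos_neg[OF h lam] unfolding u_def by simp
  then show ?thesis using e by linarith
qed

lemma p2_U_minus:
  assumes a: "a > 0" and lam: "lam < 0" and w: "wm < 0" "0 < wp"
    and cs: "cs_prop lam a c {wm..wp} D" and v: "v \<in> D"
  shows "v \<notin> Cminus lam a c wm wp"
proof
  assume vm: "v \<in> Cminus lam a c wm wp"
  have lam0: "lam \<noteq> 0" using lam by simp
  let ?V1 = "\<lambda>q. Lf lam a wm (c + a * fst q) - snd q"
  let ?V2 = "\<lambda>q. Lf lam a wp (c + a * fst q) - snd q"
  let ?W = "\<lambda>q. min (?V1 q) (?V2 q)"
  have l2: "lam^2 > 0" using lam0 by simp
  have diff: "?V2 q - ?V1 q = -((wp - wm) * (lam * (c + a * fst q) + a*(wp + wm))) / lam^2" for q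
    unfolding Lf_def using lam0 by (simp add: field_simps power2_eq_square)
  show False
  proof (rule decay_contra_gen[OF cs v, of "-lam" ?W])
    show "0 < -lam" using lam by simp
    show "continuous_on UNIV ?W" using Lf_cont by (intro continuous_intros) (auto simp: Lf_def divide_inverse intro!: continuous_intros)
    obtain s t where st: "v = (s,t)" by (cases v)
    show "?W v > 0" using vm Cminus_iff[OF lam0, of s t] st by simp
    fix w x p s assume wx: "pc_control {wm..wp} w" "is_sol lam a c w p x" "(s::real) \<ge> 0"
    show "exp (-lam * s) * ?W (x s) \<le> ?W p"
    proof (rule glob_lyap_min[where ?U1.0 = "{q. lam * (c + a * fst q) + a * wm < 0}" and ?U2.0 = "{q. lam * (c + a * fst q) + a * wp > 0}",
          OF wx(1,2) Vm_deriv _ _ Vm_deriv _ _ _ _ wx(3)])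
      show "open {q::real\<times>real. lam * (c + a * fst q) + a * wm < 0}" by (intro open_Collect_less continuous_intros)
      show "open {q::real\<times>real. lam * (c + a * fst q) + a * wp > 0}" by (intro open_Collect_less continuous_intros)
      fix q :: "real \<times> real" and \<omega> assume q1: "q \<in> {q. lam * (c + a * fst q) + a * wm < 0}" and o: "\<omega> \<in> {wm..wp}"
      show "-(wm/lam) * (a * fst (fld lam a c \<omega> q)) - snd (fld lam a c \<omega> q)
         \<le> - (-lam) * (Lf lam a wm (c + a * fst q) - snd q) - 0"
        by (rule Vm_cond[OF lam]) (use q1 o in \<open>auto intro: mult_nonneg_nonpos\<close>)
    next
      fix q :: "real \<times> real" and \<omega> assume q2: "q \<in> {q. lam * (c + a * fst q) + a * wp > 0}" and o: "\<omega> \<in> {wm..wp}"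
      show "-(wp/lam) * (a * fst (fld lam a c \<omega> q)) - snd (fld lam a c \<omega> q)
         \<le> - (-lam) * (Lf lam a wp (c + a * fst q) - snd q) - 0"
        by (rule Vm_cond[OF lam]) (use q2 o in \<open>auto intro: mult_nonpos_nonneg\<close>)
    next
      fix q :: "real \<times> real" assume "?V1 q \<le> ?V2 q"
      then have "0 \<le> -((wp - wm) * (lam * (c + a * fst q) + a*(wp + wm))) / lam^2" using diff[of q] by linarith
      then have X: "((wp - wm) * (lam * (c + a * fst q) + a*(wp + wm))) / lam^2 \<le> 0" by simp
      have "(wp - wm) * (lam * (c + a * fst q) + a*(wp + wm)) = (((wp - wm) * (lam * (c + a * fst q) + a*(wp + wm))) / lam^2) * lam^2"
        using l2 by simp
      then have "(wp - wm) * (lam * (c + a * fst q) + a*(wp + wm)) \<le> 0"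
        using mult_nonpos_nonneg[OF X, of "lam^2"] by simp
      then have "lam * (c + a * fst q) + a*(wp + wm) \<le> 0" using w by (simp add: mult_le_0_iff)
      then show "q \<in> {q. lam * (c + a * fst q) + a * wm < 0}" using a w by (simp add: algebra_simps) (smt (verit) mult_pos_pos)
    next
      fix q :: "real \<times> real" assume "?V2 q \<le> ?V1 q"
      then have "-((wp - wm) * (lam * (c + a * fst q) + a*(wp + wm))) / lam^2 \<le> 0" using diff[of q] by linarith
      then have X: "((wp - wm) * (lam * (c + a * fst q) + a*(wp + wm))) / lam^2 \<ge> 0" by simp
      have "(wp - wm) * (lam * (c + a * fst q) + a*(wp + wm)) = (((wp - wm) * (lam * (c + a * fst q) + a*(wp + wm))) / lam^2) * lam^2"
        using l2 by simp
      then have "(wp - wm) * (lam * (c + a * fst q) + a*(wp + wm)) \<ge> 0"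
        using mult_nonneg_nonneg[OF X, of "lam^2"] by simp
      then have "lam * (c + a * fst q) + a*(wp + wm) \<ge> 0" using w by (simp add: zero_le_mult_iff)
      then show "q \<in> {q. lam * (c + a * fst q) + a * wp > 0}" using a w by (simp add: algebra_simps) (smt (verit) mult_pos_neg)
    qed
  qed
qed

lemma part2:
  fixes lam a c wm wp :: real
  assumes a: "a > 0" and lam: "lam < 0" and w: "wm < 0" "0 < wp"
  shows "(\<exists>!C. control_set lam a c {wm..wp} C) \<and>
     (\<forall>C. control_set lam a c {wm..wp} C \<longrightarrow>
        closed C \<and> C = UNIV - (Cplus lam a c wm wp \<union> Cminus lam a c wm wp))"
proof -
  have lam0: "lam \<noteq> 0" using lam by simp
  let ?C0 = "C2set lam a c wm wp"
  have cs: "cs_prop lam a c {wm..wp} ?C0"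
    unfolding cs_prop_def
  proof (intro conjI ballI)
    have "(0,0) \<in> ?C0"
      using Cplus_iff[OF a w, of 0 0] Cminus_iff[OF lam0, of 0 0] Phi_nonneg[of a lam] a
        Lf_not_both_pos[OF a w lam0, of c] unfolding C2set_def by (auto simp: not_less)
    then show "?C0 \<noteq> {}" by blast
    fix v assume v: "v \<in> ?C0"
    show "?C0 \<subseteq> closure (orbit_plus lam a c {wm..wp} v)"
      using p2_E3[OF a lam w, of _ c v] Rc_orbit[of lam "{wm..wp}" a c v] lam w by auto
    show "\<exists>w x. pc_control {wm..wp} w \<and> is_sol lam a c w v x \<and> (\<forall>\<tau>\<ge>0. x \<tau> \<in> ?C0)"
      using pc_const[of 0 "{wm..wp}"] const_sol[OF lam0, of a c 0 v] p2_inv[OF a lam w v] w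
      by (intro exI conjI) auto
  qed
  have U: "D \<subseteq> ?C0" if "cs_prop lam a c {wm..wp} D" for D
    using p2_U_plus[OF a lam w that] p2_U_minus[OF a lam w that] unfolding C2set_def by auto
  from cs_unique[OF cs U] p2_closed[OF a lam w, of c] show ?thesis unfolding C2set_def by metis
qed

theorem theorem1:
  fixes lam a c wm wp :: real
  assumes "lam \<noteq> 0" and "a \<ge> 0" and "a\<^sup>2 + c\<^sup>2 \<noteq> 0" and "wm < 0" and "0 < wp"
  shows "(a = 0 \<longrightarrow>
            (\<exists>!C. control_set lam a c {wm..wp} C) \<and>
            (\<forall>C. control_set lam a c {wm..wp} C \<longrightarrow>
               closure C = UNIV \<times> ((\<lambda>w. - (c / lam) * w) ` {wm..wp}) \<and>
               (lam < 0 \<longrightarrow> closed C) \<and> (lam > 0 \<longrightarrow> open C)))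
       \<and> (a > 0 \<and> lam < 0 \<longrightarrow>
            (\<exists>!C. control_set lam a c {wm..wp} C) \<and>
            (\<forall>C. control_set lam a c {wm..wp} C \<longrightarrow>
               closed C \<and> C = UNIV - (Cplus lam a c wm wp \<union> Cminus lam a c wm wp)))"
proof (rule conjI; rule impI)
  assume a0: "a = 0"
  then have c: "c \<noteq> 0" using assms(3) by auto
  show "(\<exists>!C. control_set lam a c {wm..wp} C) \<and>
            (\<forall>C. control_set lam a c {wm..wp} C \<longrightarrow>
               closure C = UNIV \<times> ((\<lambda>w. - (c / lam) * w) ` {wm..wp}) \<and>
               (lam < 0 \<longrightarrow> closed C) \<and> (lam > 0 \<longrightarrow> open C))"
  proof (cases "lam < 0")
    case True
    have P: "(\<exists>!C. control_set lam 0 c {wm..wp} C) \<and>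
     (\<forall>C. control_set lam 0 c {wm..wp} C \<longrightarrow>
        closure C = UNIV \<times> ((\<lambda>w. - (c / lam) * w) ` {wm..wp}) \<and> closed C)"
      by (rule part1_neg[OF True c assms(4,5)])
    have nt: "\<not> lam > 0" using True by simp
    show ?thesis unfolding a0 using P True nt by blast
  next
    case False
    then have "lam > 0" using assms(1) by auto
    have P: "(\<exists>!C. control_set lam 0 c {wm..wp} C) \<and>
     (\<forall>C. control_set lam 0 c {wm..wp} C \<longrightarrow>
        closure C = UNIV \<times> ((\<lambda>w. - (c / lam) * w) ` {wm..wp}) \<and> open C)"
      by (rule part1_pos[OF \<open>lam > 0\<close> c assms(4,5)])
    have nt: "\<not> lam < 0" using \<open>lam > 0\<close> by simp
    show ?thesis unfolding a0 using P \<open>lam > 0\<close> nt by blast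
  qed
next
  assume "a > 0 \<and> lam < 0"
  then show "(\<exists>!C. control_set lam a c {wm..wp} C) \<and>
            (\<forall>C. control_set lam a c {wm..wp} C \<longrightarrow>
               closed C \<and> C = UNIV - (Cplus lam a c wm wp \<union> Cminus lam a c wm wp))"
    using part2[OF _ _ assms(4,5)] by auto
qed

end
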